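(* Let $r\in C(0,1)$ be such that $\inf_{x\in[a,b]}r(x)>0$ for every $[a,b]\subset(0,1)$, and let $\gamma>1$, $\delta>0$. Then there exists a constant $\varkappa>0$ such that for every $q\in B_{r,\gamma,\delta}$, $$\int_0^1(q-\varkappa)\,y_{q,0}^2\,dx\ge0.$$
   Context: $A_{r,\gamma}=\{q\in L_{1,loc}(0,1): q\ge0,\ \int_0^1 rq^\gamma\,dx\le1\}$. For a nonnegative $q\in C(0,1)$ with compact support in $(0,1)$, $\lambda_0(q)$ is the smallest eigenvalue of $-y''+qy=\lambda y$, $y(0)=y(1)=0$, and $y_{q,0}$ is a corresponding real eigenfunction normalized by $\|y_{q,0}\|_{L_2[0,1]}=1$. $B_{r,\gamma,\delta}$ is the set of $q\in A_{r,\gamma}$ that are continuous on $(0,1)$ with compact support in $(0,1)$ and satisfy $\lambda_0(q)\ge\pi^2+\delta$. *)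

theory Defs
  imports "HOL-Analysis.Analysis"
begin

text \<open>Functions on (0,1) are modelled as real \<Rightarrow> real; values outside (0,1) are irrelevant.\<close>

definition in_A :: "(real \<Rightarrow> real) \<Rightarrow> real \<Rightarrow> (real \<Rightarrow> real) \<Rightarrow> bool" where
  "in_A r \<gamma> q \<longleftrightarrow>
     (\<forall>a b. 0 < a \<longrightarrow> a \<le> b \<longrightarrow> b < 1 \<longrightarrow> q integrable_on {a..b}) \<and>
     (\<forall>x\<in>{0<..<1}. q x \<ge> 0) \<and>
     (\<lambda>x. r x * q x powr \<gamma>) integrable_on {0..1} \<and>
     integral {0..1} (\<lambda>x. r x * q x powr \<gamma>) \<le> 1"

definition is_eigenfun :: "(real \<Rightarrow> real) \<Rightarrow> real \<Rightarrow> (real \<Rightarrow> real) \<Rightarrow> bool" where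
  "is_eigenfun q lam y \<longleftrightarrow>
     continuous_on {0..1} y \<and> y 0 = 0 \<and> y 1 = 0 \<and> (\<exists>x\<in>{0..1}. y x \<noteq> 0) \<and>
     (\<exists>y'. \<forall>x\<in>{0<..<1}. (y has_real_derivative y' x) (at x) \<and>
                         (y' has_real_derivative ((q x - lam) * y x)) (at x))"

definition lambda0 :: "(real \<Rightarrow> real) \<Rightarrow> real" where
  "lambda0 q = Inf {lam. \<exists>y. is_eigenfun q lam y}"

definition in_B :: "(real \<Rightarrow> real) \<Rightarrow> real \<Rightarrow> real \<Rightarrow> (real \<Rightarrow> real) \<Rightarrow> bool" where
  "in_B r \<gamma> \<delta> q \<longleftrightarrow>
     in_A r \<gamma> q \<and> continuous_on {0<..<1} q \<and>
     (\<exists>a b. 0 < a \<and> a \<le> b \<and> b < 1 \<and> (\<forall>x\<in>{0<..<1} - {a..b}. q x = 0)) \<and>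
     lambda0 q \<ge> pi^2 + \<delta>"

end

theory Submission
  imports Defs
begin


lemma power_has_integral0:
  fixes s :: real and n :: nat
  assumes "0 \<le> s"
  shows "((\<lambda>t. t^n) has_integral s^(Suc n) / real (Suc n)) {0..s}"
proof -
  have "((\<lambda>t. t^n) has_integral (s^(Suc n)/real (Suc n) - 0^(Suc n)/real (Suc n))) {0..s}"
  proof (rule fundamental_theorem_of_calculus[OF assms])
    fix x assume "x \<in> {0..s}"
    show "((\<lambda>t. t^(Suc n) / real (Suc n)) has_vector_derivative x^n) (at x within {0..s})"
      unfolding has_real_derivative_iff_has_vector_derivative[symmetric]
      by (rule derivative_eq_intros refl | simp)+
  qed
  then show ?thesis by simp
qed

lemma div_le_self_real: "0 \<le> a \<Longrightarrow> 1 \<le> c \<Longrightarrow> a / c \<le> (a::real)"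
  by (simp add: divide_le_eq mult_le_cancel_left1)

fun Vs :: "(real \<Rightarrow> real) \<Rightarrow> nat \<Rightarrow> real \<Rightarrow> real" where
  "Vs p 0 = (\<lambda>x. x)"
| "Vs p (Suc n) = (\<lambda>x. integral {0..x} (\<lambda>s. integral {0..s} (\<lambda>t. p t * Vs p n t)))"

definition Gs :: "(real \<Rightarrow> real) \<Rightarrow> nat \<Rightarrow> real \<Rightarrow> real" where
  "Gs p n = (\<lambda>s. integral {0..s} (\<lambda>t. p t * Vs p n t))"

lemma Vs_Suc: "Vs p (Suc n) x = integral {0..x} (Gs p n)"
  by (simp add: Gs_def)

lemma Gs_props:
  assumes pc: "continuous_on {0..1} p" and P: "\<And>x. x \<in> {0..1} \<Longrightarrow> \<bar>p x\<bar> \<le> P"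
    and cV: "continuous_on {0..1} (Vs p n)" and bV: "\<And>x. x\<in>{0..1} \<Longrightarrow> \<bar>Vs p n x\<bar> \<le> P^n * x^n / fact n"
  shows "continuous_on {0..1} (Gs p n)"
    "\<forall>x \<in> {0..1}. (Gs p n has_real_derivative p x * Vs p n x) (at x within {0..1})"
    "\<forall>s \<in> {0..1}. \<bar>Gs p n s\<bar> \<le> P^(Suc n) * s^(Suc n) / fact (Suc n)"
proof -
  have cpV: "continuous_on {0..1} (\<lambda>t. p t * Vs p n t)" by (intro continuous_intros pc cV)
  have dG: "(Gs p n has_real_derivative p x * Vs p n x) (at x within {0..1})" if "x \<in> {0..1}" for x
    unfolding Gs_def by (rule integral_has_real_derivative[OF cpV that])
  then show "\<forall>x \<in> {0..1}. (Gs p n has_real_derivative p x * Vs p n x) (at x within {0..1})" by blast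
  show cG: "continuous_on {0..1} (Gs p n)"
    using dG by (meson DERIV_continuous continuous_on_eq_continuous_within)
  have P0: "0 \<le> P" using P[of 0] by auto
  show "\<forall>s \<in> {0..1}. \<bar>Gs p n s\<bar> \<le> P^(Suc n) * s^(Suc n) / fact (Suc n)"
  proof
  fix s :: real assume s: "s \<in> {0..1}"
  show "\<bar>Gs p n s\<bar> \<le> P^(Suc n) * s^(Suc n) / fact (Suc n)"
  proof -
    have sub: "{0..s} \<subseteq> {0..1}" using s by auto
    have int1: "(\<lambda>t. p t * Vs p n t) integrable_on {0..s}"
      by (rule integrable_continuous_real, rule continuous_on_subset[OF cpV sub])
    have hi: "((\<lambda>t. P^(Suc n) / fact n * t^n) has_integral P^(Suc n) / fact n * (s^(Suc n) / real (Suc n))) {0..s}"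
      by (rule has_integral_mult_right, rule power_has_integral0) (use s in auto)
    have "\<bar>Gs p n s\<bar> \<le> integral {0..s} (\<lambda>t. P^(Suc n) / fact n * t^n)"
      unfolding Gs_def real_norm_def[symmetric]
    proof (rule integral_norm_bound_integral[OF int1])
      show "(\<lambda>t. P ^ Suc n / fact n * t ^ n) integrable_on {0..s}" using hi by blast
      fix t assume t: "t \<in> {0..s}"
      then have t1: "t \<in> {0..1}" using s by auto
      have "norm (p t * Vs p n t) = \<bar>p t\<bar> * \<bar>Vs p n t\<bar>" by (simp add: abs_mult)
      also have "\<dots> \<le> P * (P^n * t^n / fact n)"
        by (rule mult_mono) (use P[OF t1] bV[OF t1] P0 in auto)
      finally show "norm (p t * Vs p n t) \<le> P ^ Suc n / fact n * t ^ n" by simp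
    qed
    also have "\<dots> = P^(Suc n) / fact n * (s^(Suc n) / real (Suc n))" using hi by (rule integral_unique)
    also have "\<dots> = P^(Suc n) * s^(Suc n) / fact (Suc n)" by (simp add: field_simps)
    finally show ?thesis .
  qed
  qed
qed

lemma Vs_props:
  assumes pc: "continuous_on {0..1} p" and P: "\<And>x. x \<in> {0..1} \<Longrightarrow> \<bar>p x\<bar> \<le> P"
  shows "continuous_on {0..1} (Vs p n) \<and> (\<forall>x\<in>{0..1}. \<bar>Vs p n x\<bar> \<le> P^n * x^n / fact n)"
proof (induction n)
  case 0
  then show ?case by (auto intro: continuous_intros)
next
  case (Suc n)
  have cV: "continuous_on {0..1} (Vs p n)" and bV: "\<And>x. x\<in>{0..1} \<Longrightarrow> \<bar>Vs p n x\<bar> \<le> P^n * x^n / fact n"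
    using Suc by auto
  note GG = Gs_props[OF pc P cV bV]
  have cG: "continuous_on {0..1} (Gs p n)" by (rule GG(1))
  have bG: "\<bar>Gs p n s\<bar> \<le> P^(Suc n) * s^(Suc n) / fact (Suc n)" if s: "s \<in> {0..1}" for s
    using GG(3) s by blast
  have P0: "0 \<le> P" using P[of 0] by auto
  have dV: "(Vs p (Suc n) has_real_derivative Gs p n x) (at x within {0..1})" if "x \<in> {0..1}" for x
    unfolding Vs_Suc[abs_def] by (rule integral_has_real_derivative[OF cG that])
  have cV': "continuous_on {0..1} (Vs p (Suc n))"
    using dV by (meson DERIV_continuous continuous_on_eq_continuous_within)
  have bV': "\<bar>Vs p (Suc n) x\<bar> \<le> P^(Suc n) * x^(Suc n) / fact (Suc n)" if x: "x \<in> {0..1}" for x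
  proof -
    have sub: "{0..x} \<subseteq> {0..1}" using x by auto
    have int1: "Gs p n integrable_on {0..x}"
      by (rule integrable_continuous_real, rule continuous_on_subset[OF cG sub])
    have hi: "((\<lambda>t. P^(Suc n) / fact (Suc n) * t^(Suc n)) has_integral P^(Suc n) / fact (Suc n) * (x^(Suc (Suc n)) / real (Suc (Suc n)))) {0..x}"
      by (rule has_integral_mult_right, rule power_has_integral0) (use x in auto)
    have "\<bar>Vs p (Suc n) x\<bar> \<le> integral {0..x} (\<lambda>t. P^(Suc n) / fact (Suc n) * t^(Suc n))"
      unfolding Vs_Suc real_norm_def[symmetric]
    proof (rule integral_norm_bound_integral[OF int1])
      show "(\<lambda>t. P^(Suc n) / fact (Suc n) * t^(Suc n)) integrable_on {0..x}" using hi by blast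
      fix t assume t: "t \<in> {0..x}"
      then have t1: "t \<in> {0..1}" using x by auto
      show "norm (Gs p n t) \<le> P^(Suc n) / fact (Suc n) * t^(Suc n)" using bG[OF t1] by simp
    qed
    also have "\<dots> = P^(Suc n) / fact (Suc n) * (x^(Suc (Suc n)) / real (Suc (Suc n)))" using hi by (rule integral_unique)
    also have "\<dots> \<le> P^(Suc n) * x^(Suc n) / fact (Suc n)"
    proof -
      have "x^(Suc (Suc n)) / real (Suc (Suc n)) \<le> x^(Suc n)"
      proof -
        have "x^(Suc (Suc n)) \<le> x^(Suc n)" using x by (intro power_decreasing) auto
        moreover have "x^(Suc (Suc n)) / real (Suc (Suc n)) \<le> x^(Suc (Suc n))" if "0 \<le> x^(Suc (Suc n))"
          by (rule div_le_self_real[OF that]) simp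
        moreover have "0 \<le> x^(Suc (Suc n))" using x by simp
        ultimately show ?thesis by linarith
      qed
      then have "P^(Suc n)/fact(Suc n) * (x^(Suc (Suc n))/real(Suc (Suc n))) \<le> P^(Suc n)/fact(Suc n) * x^(Suc n)"
        by (rule mult_left_mono) (use P0 in simp)
      then show ?thesis by simp
    qed
    finally show ?thesis .
  qed
  show ?case using cV' bV' by blast
qed



definition Ws :: "(real \<Rightarrow> real) \<Rightarrow> nat \<Rightarrow> real \<Rightarrow> real" where
  "Ws p n = (case n of 0 \<Rightarrow> (\<lambda>_. 1) | Suc m \<Rightarrow> Gs p m)"
definition Ds :: "(real \<Rightarrow> real) \<Rightarrow> nat \<Rightarrow> real \<Rightarrow> real" where
  "Ds p n = (case n of 0 \<Rightarrow> (\<lambda>_. 0) | Suc m \<Rightarrow> (\<lambda>x. p x * Vs p m x))"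

lemma summable_Pfact: "summable (\<lambda>n. P^n / fact n :: real)"
  using summable_exp[of P] by (simp add: field_simps)

lemma ode_exists:
  fixes p :: "real \<Rightarrow> real"
  assumes pc: "continuous_on {0..1} p"
  shows "\<exists>u u'. u 0 = 0 \<and> u' 0 = 1 \<and> (\<forall>x\<in>{0..1}. (u has_real_derivative u' x) (at x within {0..1}) \<and>
            (u' has_real_derivative p x * u x) (at x within {0..1}))"
proof -
  obtain P where P: "\<And>x. x \<in> {0..1} \<Longrightarrow> \<bar>p x\<bar> \<le> P"
    using compact_imp_bounded[OF compact_continuous_image[OF pc compact_Icc]]
    unfolding bounded_iff by force
  have P0: "0 \<le> P" using P[of 0] by auto
  note VP = Vs_props[OF pc P]
  have cV: "continuous_on {0..1} (Vs p n)" for n using VP by blast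
  have bV: "\<forall>x\<in>{0..1}. \<bar>Vs p n x\<bar> \<le> P^n * x^n / fact n" for n using VP by blast
  note GG = Gs_props[OF pc P cV] 
  have dG: "(Gs p n has_real_derivative p x * Vs p n x) (at x within {0..1})" if "x \<in> {0..1}" for x n
    using GG(2) bV that by blast
  have cG: "continuous_on {0..1} (Gs p n)" for n
    using GG(1) bV by blast
  have bG: "\<bar>Gs p n x\<bar> \<le> P^(Suc n) * x^(Suc n) / fact (Suc n)" if "x \<in> {0..1}" for x n
    using GG(3) bV that by blast
  have dV: "(Vs p n has_real_derivative Ws p n x) (at x within {0..1})" if "x \<in> {0..1}" for x n
  proof (cases n)
    case 0 then show ?thesis by (auto simp: Ws_def intro!: derivative_eq_intros)
  next
    case (Suc m)
    show ?thesis unfolding Suc Vs_Suc[abs_def] Ws_def by (simp, rule integral_has_real_derivative[OF cG that])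
  qed
  have dW: "(Ws p n has_real_derivative Ds p n x) (at x within {0..1})" if "x \<in> {0..1}" for x n
  proof (cases n)
    case 0 then show ?thesis by (auto simp: Ws_def Ds_def intro!: derivative_eq_intros)
  next
    case (Suc m)
    show ?thesis unfolding Suc Ws_def Ds_def using dG[OF that] by simp
  qed
  have pw: "x^n \<le> 1" if "x \<in> {0..1}" for x :: real and n using that by (auto intro: power_le_one)
  have bW: "norm (Ws p n x) \<le> P^n / fact n" if x: "x \<in> {0..1}" for x n
  proof (cases n)
    case 0 then show ?thesis by (simp add: Ws_def)
  next
    case (Suc m)
    have "\<bar>Gs p m x\<bar> \<le> P^(Suc m) * x^(Suc m) / fact (Suc m)" by (rule bG[OF x])
    also have "\<dots> \<le> P^(Suc m) * 1 / fact (Suc m)"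
      by (intro divide_right_mono mult_left_mono pw x) (use P0 in auto)
    finally show ?thesis by (simp add: Suc Ws_def)
  qed
  have bVV: "norm (Vs p n x) \<le> P^n / fact n" if x: "x \<in> {0..1}" for x n
  proof -
    have "\<bar>Vs p n x\<bar> \<le> P^n * x^n / fact n" using bV x by blast
    also have "\<dots> \<le> P^n * 1 / fact n"
      by (intro divide_right_mono mult_left_mono pw x) (use P0 in auto)
    finally show ?thesis by simp
  qed
  define M where "M n = (case n of 0 \<Rightarrow> 0 | Suc m \<Rightarrow> P * (P^m / fact m))" for n
  have bD: "norm (Ds p n x) \<le> M n" if x: "x \<in> {0..1}" for x n
  proof (cases n)
    case 0 then show ?thesis by (simp add: Ds_def M_def)
  next
    case (Suc m)
    have "\<bar>p x * Vs p m x\<bar> \<le> P * (P^m / fact m)"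
      unfolding abs_mult by (rule mult_mono) (use P[OF x] bVV[OF x, of m] P0 in auto)
    then show ?thesis by (simp add: Suc Ds_def M_def)
  qed
  have sM: "summable M"
  proof -
    have "summable (\<lambda>m. M (Suc m))" unfolding M_def using summable_mult[OF summable_Pfact, of P] by simp
    then show ?thesis using summable_Suc_iff by blast
  qed
  define u' where "u' x = (\<Sum>n. Ws p n x)" for x
  have ulW: "uniform_limit {0..1} (\<lambda>n x. \<Sum>i<n. Ws p i x) u' sequentially"
    unfolding u'_def by (rule Weierstrass_m_test[OF bW summable_Pfact])
  have sV0: "summable (\<lambda>n. Vs p n 0)"
  proof -
    have "Vs p n 0 = 0" for n by (cases n) auto
    then show ?thesis by simp
  qed
  have "\<exists>u. \<forall>x\<in>{0..1}. (\<lambda>n. Vs p n x) sums u x \<and> (u has_field_derivative u' x) (at x within {0..1})" by (rule has_field_derivative_series[OF convex_real_interval(5) dV ulW _ sV0]) auto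
  then obtain u where u0: "\<forall>x\<in>{0..1}. (\<lambda>n. Vs p n x) sums u x \<and> (u has_field_derivative u' x) (at x within {0..1})" by blast
  have u: "(\<lambda>n. Vs p n x) sums u x \<and> (u has_field_derivative u' x) (at x within {0..1})" if "x \<in> {0..1}" for x
    using u0 that by blast
  have ulD: "uniform_limit {0..1} (\<lambda>n x. \<Sum>i<n. Ds p i x) (\<lambda>x. \<Sum>n. Ds p n x) sequentially"
    by (rule Weierstrass_m_test[OF bD sM])
  have sW0: "summable (\<lambda>n. Ws p n 0)"
    by (rule summable_comparison_test'[OF summable_Pfact[of P], where N=0]) (use bW in auto)
  have "\<exists>v. \<forall>x\<in>{0..1}. (\<lambda>n. Ws p n x) sums v x \<and> (v has_field_derivative (\<Sum>n. Ds p n x)) (at x within {0..1})" by (rule has_field_derivative_series[OF convex_real_interval(5) dW ulD _ sW0]) auto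
  then obtain v where v0: "\<forall>x\<in>{0..1}. (\<lambda>n. Ws p n x) sums v x \<and> (v has_field_derivative (\<Sum>n. Ds p n x)) (at x within {0..1})" by blast
  have v: "(\<lambda>n. Ws p n x) sums v x \<and> (v has_field_derivative (\<Sum>n. Ds p n x)) (at x within {0..1})" if "x \<in> {0..1}" for x
    using v0 that by blast
  have vu': "v x = u' x" if "x \<in> {0..1}" for x
    using v[OF that] unfolding u'_def by (simp add: sums_iff)
  have Dsum: "(\<Sum>n. Ds p n x) = p x * u x" if x: "x \<in> {0..1}" for x
  proof -
    have "(\<lambda>m. p x * Vs p m x) sums (p x * u x)" using sums_mult[OF u[OF x, THEN conjunct1]] by simp
    then have "(\<lambda>m. Ds p (Suc m) x) sums (p x * u x)" by (simp add: Ds_def)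
    then have "(\<lambda>n. Ds p n x) sums (p x * u x + Ds p 0 x)" using sums_Suc_iff by blast
    then show ?thesis by (simp add: Ds_def sums_iff)
  qed
  have u0: "u 0 = 0"
  proof -
    have "(\<lambda>n. Vs p n 0) sums u 0" using u[of 0] by auto
    moreover have "Vs p n 0 = 0" for n by (cases n) auto
    ultimately show ?thesis by (simp add: sums_iff)
  qed
  have u'0: "u' 0 = 1"
  proof -
    have "(\<lambda>n. Ws p n 0) sums u' 0" using v[of 0] vu'[of 0] by auto
    then have "(\<lambda>m. Ws p (Suc m) 0) sums (u' 0 - Ws p 0 0)" by (subst sums_Suc_iff) simp
    moreover have "Ws p (Suc m) 0 = 0" for m by (simp add: Ws_def Gs_def)
    ultimately show ?thesis by (simp add: sums_iff Ws_def)
  qed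
  have "(u' has_real_derivative p x * u x) (at x within {0..1})" if x: "x \<in> {0..1}" for x
  proof -
    have "(v has_real_derivative p x * u x) (at x within {0..1})" using v[OF x] Dsum[OF x] by simp
    then show ?thesis
      by (rule has_field_derivative_transform_within[where d=1]) (use x vu' in auto)
  qed
  then show ?thesis using u u0 u'0 by blast
qed



lemma mono_deriv:
  fixes f f' :: "real \<Rightarrow> real"
  assumes ab: "a \<le> b" and d: "\<And>x. x\<in>{a..b} \<Longrightarrow> (f has_real_derivative f' x) (at x within {a..b})"
    and nn: "\<And>x. x\<in>{a..b} \<Longrightarrow> 0 \<le> f' x"
  shows "f a \<le> f b"
proof -
  have "(f' has_integral (f b - f a)) {a..b}"
    by (rule fundamental_theorem_of_calculus[OF ab]) (use d has_real_derivative_iff_has_vector_derivative in auto)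
  then have "0 \<le> f b - f a" by (rule has_integral_nonneg) (use nn in auto)
  then show ?thesis by simp
qed

lemma mono_deriv01:
  fixes f f' :: "real \<Rightarrow> real"
  assumes d: "\<And>x. x\<in>{0..1} \<Longrightarrow> (f has_real_derivative f' x) (at x within {0..1})"
    and xy: "0 \<le> x" "x \<le> y" "y \<le> 1"
    and nn: "\<And>t. t\<in>{x..y} \<Longrightarrow> 0 \<le> f' t"
  shows "f x \<le> f y"
proof (rule mono_deriv[OF xy(2) _ nn])
  fix t assume t: "t \<in> {x..y}"
  then have "t \<in> {0..1}" using xy by auto
  from DERIV_subset[OF d[OF this]] show "(f has_real_derivative f' t) (at t within {x..y})"
    using xy by auto
qed

definition sol :: "(real \<Rightarrow> real) \<Rightarrow> (real \<Rightarrow> real) \<Rightarrow> (real \<Rightarrow> real) \<Rightarrow> bool" where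
  "sol p u u' \<longleftrightarrow> u 0 = 0 \<and> u' 0 = 1 \<and> (\<forall>x\<in>{0..1}. (u has_real_derivative u' x) (at x within {0..1}) \<and>
            (u' has_real_derivative p x * u x) (at x within {0..1}))"

lemma sol_D:
  assumes "sol p u u'" "x \<in> {0..1}"
  shows "(u has_real_derivative u' x) (at x within {0..1})" "(u' has_real_derivative p x * u x) (at x within {0..1})"
  using assms unfolding sol_def by auto

lemma sol_cont:
  assumes "sol p u u'"
  shows "continuous_on {0..1} u" "continuous_on {0..1} u'"
  using sol_D[OF assms] by (meson DERIV_continuous continuous_on_eq_continuous_within)+

lemma gronwall_fwd:
  fixes E E' :: "real \<Rightarrow> real"
  assumes d: "\<And>x. x\<in>{0..1} \<Longrightarrow> (E has_real_derivative E' x) (at x within {0..1})"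
    and le: "\<And>x. x\<in>{0..1} \<Longrightarrow> E' x \<le> C * E x + K" and C: "0 \<le> C" and K: "0 \<le> K"
    and E0: "0 \<le> E 0" and x: "x \<in> {0..1}"
  shows "E x \<le> (E 0 + K) * exp C"
proof -
  define F where "F t = E 0 + K * t - exp (- C * t) * E t" for t
  have dF: "(F has_real_derivative (K - (exp (- C * t) * (- C) * E t + exp (- C * t) * E' t))) (at t within {0..1})"
    if "t \<in> {0..1}" for t
    unfolding F_def by (rule derivative_eq_intros refl d[OF that] | simp)+
  have "F 0 \<le> F x"
  proof (rule mono_deriv01[OF dF])
    fix t assume t: "t \<in> {0..x}"
    then have t1: "t \<in> {0..1}" using x by auto
    have "exp (- C * t) * (E' t - C * E t) \<le> exp (- C * t) * K"
      by (rule mult_left_mono) (use le[OF t1] in auto)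
    also have "\<dots> \<le> 1 * K" by (rule mult_right_mono) (use C t K in auto)
    finally show "0 \<le> K - (exp (- C * t) * (- C) * E t + exp (- C * t) * E' t)"
      by (simp add: algebra_simps)
  qed (use x in auto)
  then have "exp (- C * x) * E x \<le> E 0 + K * x" by (simp add: F_def)
  also have "\<dots> \<le> E 0 + K" using x K by (simp add: mult_left_le)
  finally have h: "exp (- C * x) * E x \<le> E 0 + K" .
  have "E x = exp (C * x) * (exp (- C * x) * E x)" by (simp add: exp_minus field_simps)
  also have "\<dots> \<le> exp (C * x) * (E 0 + K)" by (rule mult_left_mono[OF h]) simp
  also have "\<dots> \<le> exp C * (E 0 + K)"
    by (rule mult_right_mono) (use x C E0 K in \<open>auto simp: mult_left_le\<close>)
  finally show ?thesis by (simp add: mult.commute)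
qed

lemma gronwall_bwd:
  fixes E E' :: "real \<Rightarrow> real"
  assumes d: "\<And>x. x\<in>{0..1} \<Longrightarrow> (E has_real_derivative E' x) (at x within {0..1})"
    and le: "\<And>x. x\<in>{0..1} \<Longrightarrow> - C * E x \<le> E' x" and x: "x \<in> {0..1}"
  shows "E 0 \<le> exp (C * x) * E x"
proof -
  define F where "F t = exp (C * t) * E t" for t
  have dF: "(F has_real_derivative (exp (C * t) * C * E t + exp (C * t) * E' t)) (at t within {0..1})"
    if "t \<in> {0..1}" for t
    unfolding F_def by (rule derivative_eq_intros refl d[OF that] | simp)+
  have "F 0 \<le> F x"
  proof (rule mono_deriv01[OF dF])
    fix t assume t: "t \<in> {0..x}"
    then have t1: "t \<in> {0..1}" using x by auto
    have "0 \<le> exp (C * t) * (C * E t + E' t)"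
      by (rule mult_nonneg_nonneg) (use le[OF t1] in auto)
    then show "0 \<le> exp (C * t) * C * E t + exp (C * t) * E' t" by (simp add: algebra_simps)
  qed (use x in auto)
  then show ?thesis by (simp add: F_def)
qed

lemma energy_deriv:
  fixes p u u' :: "real \<Rightarrow> real"
  assumes s: "sol p u u'" and x: "x \<in> {0..1}"
  shows "((\<lambda>t. (u t)^2 + (u' t)^2) has_real_derivative 2 * u x * u' x * (1 + p x)) (at x within {0..1})"
proof -
  have "((\<lambda>t. (u t)^2 + (u' t)^2) has_real_derivative (2 * u x * u' x + 2 * u' x * (p x * u x))) (at x within {0..1})"
    by (rule derivative_eq_intros sol_D[OF s x] refl | simp)+
  then show ?thesis by (simp add: algebra_simps)
qed

lemma abs_2xy: "\<bar>2 * a * b\<bar> \<le> a^2 + (b::real)^2"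
proof -
  have "0 \<le> (\<bar>a\<bar> - \<bar>b\<bar>)^2" by simp
  then show ?thesis by (simp add: power2_eq_square algebra_simps abs_mult)
qed

lemma energy_bound:
  fixes p u u' :: "real \<Rightarrow> real"
  assumes s: "sol p u u'" and P: "\<And>x. x \<in> {0..1} \<Longrightarrow> \<bar>p x\<bar> \<le> P" and x: "x \<in> {0..1}"
  shows "(u x)^2 + (u' x)^2 \<le> exp (1 + P)"
proof -
  have P0: "0 \<le> P" using P[of 0] by auto
  have u0: "u 0 = 0" "u' 0 = 1" using s by (auto simp: sol_def)
  have "(u x)^2 + (u' x)^2 \<le> ((u 0)^2 + (u' 0)^2 + 0) * exp (1 + P)"
  proof (rule gronwall_fwd[OF energy_deriv[OF s]])
    fix t :: real assume t: "t \<in> {0..1}"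
    have "2 * u t * u' t * (1 + p t) \<le> \<bar>2 * u t * u' t\<bar> * \<bar>1 + p t\<bar>"
      by (metis abs_ge_self abs_mult)
    also have "\<dots> \<le> ((u t)^2 + (u' t)^2) * (1 + P)"
      by (rule mult_mono[OF abs_2xy]) (use P[OF t] in auto)
    finally show "2 * u t * u' t * (1 + p t) \<le> (1 + P) * ((u t)^2 + (u' t)^2) + 0" by (simp add: mult.commute)
  qed (use P0 x in auto)
  then show ?thesis using u0 by simp
qed

lemma no_double_zero:
  fixes p u u' :: "real \<Rightarrow> real"
  assumes s: "sol p u u'" and P: "\<And>x. x \<in> {0..1} \<Longrightarrow> \<bar>p x\<bar> \<le> P" and x: "x \<in> {0..1}"
    and z: "u x = 0" "u' x = 0"
  shows False
proof -
  have u0: "u 0 = 0" "u' 0 = 1" using s by (auto simp: sol_def)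
  have "(u 0)^2 + (u' 0)^2 \<le> exp ((1 + P) * x) * ((u x)^2 + (u' x)^2)"
  proof (rule gronwall_bwd[OF energy_deriv[OF s]])
    fix t :: real assume t: "t \<in> {0..1}"
    have "- (\<bar>2 * u t * u' t\<bar> * \<bar>1 + p t\<bar>) \<le> 2 * u t * u' t * (1 + p t)"
      by (metis abs_ge_minus_self abs_mult minus_le_iff)
    moreover have "\<bar>2 * u t * u' t\<bar> * \<bar>1 + p t\<bar> \<le> ((u t)^2 + (u' t)^2) * (1 + P)"
      by (rule mult_mono[OF abs_2xy]) (use P[OF t] in auto)
    ultimately show "- (1 + P) * ((u t)^2 + (u' t)^2) \<le> 2 * u t * u' t * (1 + p t)" by (simp add: algebra_simps)
  qed (use x in auto)
  then show False using u0 z by simp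
qed



lemma sol_stab:
  fixes p0 u1 u1' u2 u2' :: "real \<Rightarrow> real"
  assumes s1: "sol (\<lambda>x. p0 x - l1) u1 u1'" and s2: "sol (\<lambda>x. p0 x - l2) u2 u2'"
   and P: "\<And>x. x\<in>{0..1} \<Longrightarrow> \<bar>p0 x - l1\<bar> \<le> P" and B: "\<And>x. x\<in>{0..1} \<Longrightarrow> (u2 x)^2 \<le> B"
   and x: "x\<in>{0..1}"
  shows "(u1 x - u2 x)^2 \<le> (l1 - l2)^2 * B * exp (2 + P)"
proof -
  have P0: "0 \<le> P" using P[of 0] by auto
  have B0: "0 \<le> B" using B[of 0] by (meson atLeastAtMost_iff order_trans zero_le_one zero_le_power2 order_refl)
  define E where "E t = (u1 t - u2 t)^2 + (u1' t - u2' t)^2" for t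
  define d where "d = l2 - l1"
  have dE: "(E has_real_derivative 2 * (u1 t - u2 t) * (u1' t - u2' t) +
       2 * (u1' t - u2' t) * ((p0 t - l1) * u1 t - (p0 t - l2) * u2 t)) (at t within {0..1})"
    if t: "t \<in> {0..1}" for t
  proof -
    note d1 = sol_D[OF s1 t] and d2 = sol_D[OF s2 t]
    show ?thesis unfolding E_def
      by (rule derivative_eq_intros d1 d2 refl | simp add: algebra_simps)+
  qed
  have "E x \<le> (E 0 + d^2 * B) * exp (2 + P)"
  proof (rule gronwall_fwd[OF dE])
    fix t :: real assume t: "t \<in> {0..1}"
    let ?w = "u1 t - u2 t" and ?w' = "u1' t - u2' t"
    have eq: "(p0 t - l1) * u1 t - (p0 t - l2) * u2 t = (p0 t - l1) * ?w + d * u2 t"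
      by (simp add: d_def algebra_simps)
    have a1: "2 * ?w * ?w' * (1 + (p0 t - l1)) \<le> (1 + P) * E t"
    proof -
      have "2 * ?w * ?w' * (1 + (p0 t - l1)) \<le> \<bar>2 * ?w * ?w'\<bar> * \<bar>1 + (p0 t - l1)\<bar>"
        by (metis abs_ge_self abs_mult)
      also have "\<dots> \<le> (?w^2 + ?w'^2) * (1 + P)"
        by (rule mult_mono[OF abs_2xy]) (use P[OF t] in auto)
      finally show ?thesis by (simp add: E_def mult.commute)
    qed
    have a2: "2 * ?w' * (d * u2 t) \<le> E t + d^2 * B"
    proof -
      have "2 * ?w' * (d * u2 t) \<le> \<bar>2 * ?w' * (d * u2 t)\<bar>" by simp
      also have "\<dots> \<le> ?w'^2 + (d * u2 t)^2" using abs_2xy[of ?w' "d * u2 t"] by simp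
      also have "(d * u2 t)^2 = d^2 * (u2 t)^2" by (simp add: power_mult_distrib)
      also have "d^2 * (u2 t)^2 \<le> d^2 * B" by (rule mult_left_mono[OF B[OF t]]) simp
      moreover have "0 \<le> ?w^2" by simp
      ultimately show ?thesis unfolding E_def by linarith
    qed
    show "2 * ?w * ?w' + 2 * ?w' * ((p0 t - l1) * u1 t - (p0 t - l2) * u2 t) \<le> (2 + P) * E t + d^2 * B"
      unfolding eq using a1 a2 by (simp add: algebra_simps)
  qed (use P0 B0 x in \<open>auto simp: E_def\<close>)
  moreover have "E 0 = 0" using s1 s2 by (simp add: E_def sol_def)
  moreover have "(u1 x - u2 x)^2 \<le> E x" by (simp add: E_def)
  ultimately show ?thesis by (simp add: d_def power2_commute)
qed

lemma sq_le_imp_abs_le: "(a::real)^2 \<le> B \<Longrightarrow> 1 \<le> B \<Longrightarrow> \<bar>a\<bar> \<le> B"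
proof -
  assume h: "a^2 \<le> B" "1 \<le> B"
  show ?thesis
  proof (cases "\<bar>a\<bar> \<le> 1")
    case True then show ?thesis using h by linarith
  next
    case False
    then have "1 * \<bar>a\<bar> \<le> \<bar>a\<bar> * \<bar>a\<bar>" by (intro mult_right_mono) auto
    also have "\<dots> = a^2" by (simp add: power2_eq_square abs_mult_self_eq)
    finally show ?thesis using h by simp
  qed
qed

lemma sol_near0:
  fixes p u u' :: "real \<Rightarrow> real"
  assumes s: "sol p u u'" and P: "\<And>x. x \<in> {0..1} \<Longrightarrow> \<bar>p x\<bar> \<le> P"
    and x: "0 \<le> x" "x \<le> 1 / (2 * (P * exp (1 + P) + 1))"
  shows "x / 2 \<le> u x"
proof -
  define L where "L = P * exp (1 + P) + 1"
  have P0: "0 \<le> P" using P[of 0] by auto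
  have L1: "1 \<le> L" using P0 by (simp add: L_def)
  have xL: "x \<le> 1 / (2 * L)" using x by (simp add: L_def)
  have x1: "x \<le> 1"
  proof -
    have "1 / (2 * L) \<le> 1" using L1 by (simp add: field_simps)
    then show ?thesis using xL by linarith
  qed
  have ub: "\<bar>u t\<bar> \<le> exp (1 + P)" if t: "t \<in> {0..1}" for t
  proof (rule sq_le_imp_abs_le)
    show "(u t)^2 \<le> exp (1 + P)" using energy_bound[OF s P t] by (smt (verit) zero_le_power2)
    show "1 \<le> exp (1 + P)" using P0 by simp
  qed
  have pu: "\<bar>p t * u t\<bar> \<le> L" if t: "t \<in> {0..1}" for t
  proof -
    have "\<bar>p t * u t\<bar> \<le> P * exp (1 + P)" unfolding abs_mult
      by (rule mult_mono) (use P[OF t] ub[OF t] P0 in auto)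
    then show ?thesis by (simp add: L_def)
  qed
  have d1: "((\<lambda>t. u' t + L * t) has_real_derivative p t * u t + L) (at t within {0..1})" if t: "t \<in> {0..1}" for t
    by (rule derivative_eq_intros sol_D[OF s t] refl | simp)+
  have u'lb: "1 / 2 \<le> u' t" if t: "0 \<le> t" "t \<le> x" for t
  proof -
    have "u' 0 + L * 0 \<le> u' t + L * t"
      by (rule mono_deriv01[OF d1]) (use t x1 pu in \<open>auto simp: abs_le_iff\<close>, smt (verit) abs_le_iff atLeastAtMost_iff pu)
    then have "1 \<le> u' t + L * t" using s by (simp add: sol_def)
    moreover have "L * t \<le> 1 / 2"
    proof -
      have "t \<le> 1 / (2 * L)" using t xL by linarith
      then have "L * t \<le> L * (1 / (2 * L))" using L1 by (intro mult_left_mono) auto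
      also have "\<dots> = 1 / 2" using L1 by (simp add: field_simps)
      finally show ?thesis .
    qed
    ultimately show ?thesis by linarith
  qed
  have d2: "((\<lambda>t. u t - t / 2) has_real_derivative u' t - 1 / 2) (at t within {0..1})" if t: "t \<in> {0..1}" for t
    by (rule derivative_eq_intros sol_D[OF s t] refl | simp)+
  have "u 0 - 0 / 2 \<le> u x - x / 2"
    by (rule mono_deriv01[OF d2]) (use x x1 u'lb in auto)
  then show ?thesis using s by (simp add: sol_def)
qed

lemma sol_pos:
  fixes p u u' :: "real \<Rightarrow> real"
  assumes s: "sol p u u'" and P: "\<And>x. x \<in> {0..1} \<Longrightarrow> \<bar>p x\<bar> \<le> P"
    and pn: "\<And>x. x \<in> {0..1} \<Longrightarrow> 0 \<le> p x" and x: "0 < x" "x \<le> 1"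
  shows "0 < u x"
proof -
  define x1 where "x1 = 1 / (2 * (P * exp (1 + P) + 1))"
  have P0: "0 \<le> P" using P[of 0] by auto
  have PE: "0 \<le> P * exp (1 + P)" using P0 by simp
  have x1p: "0 < x1" unfolding x1_def using PE by simp
  have x11: "x1 \<le> 1" unfolding x1_def using PE by (simp add: field_simps)
  have near: "t / 2 \<le> u t" if "0 \<le> t" "t \<le> x1" for t
    using sol_near0[OF s P] that by (simp add: x1_def)
  show ?thesis
  proof (cases "x \<le> x1")
    case True then show ?thesis using near[of x] x by simp
  next
    case False
    have dh: "((\<lambda>t. u t * u' t) has_real_derivative (u' t * u' t + u t * (p t * u t))) (at t within {0..1})"
      if t: "t \<in> {0..1}" for t
      by (rule derivative_eq_intros sol_D[OF s t] refl | simp)+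
    have uu': "0 \<le> u t * u' t" if t: "0 \<le> t" "t \<le> 1" for t
    proof -
      have "u 0 * u' 0 \<le> u t * u' t"
      proof (rule mono_deriv01[OF dh])
        fix r assume r: "r \<in> {0..t}"
        have "0 \<le> p r * (u r * u r)" using pn[of r] r t by (subst mult_nonneg_nonneg) auto
        then show "0 \<le> u' r * u' r + u r * (p r * u r)" by (simp add: algebra_simps)
      qed (use t in auto)
      then show ?thesis using s by (simp add: sol_def)
    qed
    have dsq: "((\<lambda>t. (u t)^2) has_real_derivative 2 * u t * u' t) (at t within {0..1})" if t: "t \<in> {0..1}" for t
      by (rule derivative_eq_intros sol_D[OF s t] refl | simp)+
    have sqmono: "(u x1)^2 \<le> (u t)^2" if t: "x1 \<le> t" "t \<le> 1" for t
      by (rule mono_deriv01[OF dsq]) (use t x1p uu' in auto)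
    have ux1: "0 < u x1" using near[of x1] x1p by simp
    show ?thesis
    proof (rule ccontr)
      assume "\<not> 0 < u x"
      then have "u x \<le> 0" by simp
      then obtain z where z: "x1 \<le> z" "z \<le> x" "u z = 0"
        using IVT2'[of u x 0 x1] False ux1 continuous_on_subset[OF sol_cont(1)[OF s], of "{x1..x}"] x x1p
        by auto
      have "(u x1)^2 \<le> (u z)^2" by (rule sqmono) (use z x in auto)
      then show False using z ux1 by simp
    qed
  qed
qed




lemma p0_cont:
  fixes q :: "real \<Rightarrow> real"
  assumes qc: "continuous_on {0<..<1} q" and ab: "0 < a" "a \<le> b" "b < 1"
    and qz: "\<forall>x\<in>{0<..<1} - {a..b}. q x = 0"
  shows "continuous_on {0..1} (\<lambda>x. if x \<in> {0<..<1} then q x else 0)"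
proof -
  define p0 where "p0 = (\<lambda>x. if x \<in> {0<..<1} then q x else (0::real))"
  define c where "c = (1 + b) / 2"
  have c: "b < c" "c < 1" using ab by (auto simp: c_def)
  have "continuous_on {0..a/2} p0 \<longleftrightarrow> continuous_on {0..a/2} (\<lambda>_. 0::real)"
    by (rule continuous_on_cong) (use qz ab in \<open>auto simp: p0_def\<close>)
  then have c1: "continuous_on {0..a/2} p0" by simp
  have "continuous_on {c..1} p0 \<longleftrightarrow> continuous_on {c..1} (\<lambda>_. 0::real)"
    by (rule continuous_on_cong) (use qz ab c in \<open>auto simp: p0_def\<close>)
  then have c3: "continuous_on {c..1} p0" by simp
  have "continuous_on {a/2..c} p0 \<longleftrightarrow> continuous_on {a/2..c} q"
    by (rule continuous_on_cong) (use ab c in \<open>auto simp: p0_def\<close>)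
  moreover have "continuous_on {a/2..c} q" by (rule continuous_on_subset[OF qc]) (use ab c in auto)
  ultimately have c2: "continuous_on {a/2..c} p0" by simp
  have "continuous_on ({0..a/2} \<union> {a/2..c} \<union> {c..1}) p0"
    by (intro continuous_on_closed_Un c1 c2 c3 closed_Un closed_atLeastAtMost)
  moreover have "{0..a/2} \<union> {a/2..c} \<union> {c..1} = {0..(1::real)}" using ab c by auto
  ultimately show ?thesis by (simp add: p0_def)
qed



lemma eigen_pos_case:
  fixes q z z' :: "real \<Rightarrow> real"
  assumes qn: "\<forall>x\<in>{0<..<1}. 0 \<le> q x" and l: "l < 0"
    and zc: "continuous_on {0..1} z" and z01: "z 0 = 0" "z 1 = 0"
    and zd: "\<forall>x\<in>{0<..<1}. (z has_real_derivative z' x) (at x) \<and> (z' has_real_derivative (q x - l) * z x) (at x)"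
    and pos: "x0 \<in> {0..1}" "0 < z x0"
  shows False
proof -
  obtain xm where xm: "xm \<in> {0..1}" "\<forall>y\<in>{0..1}. z y \<le> z xm"
    using continuous_attains_sup[OF compact_Icc _ zc] by auto
  have "z x0 \<le> z xm" using xm(2) pos(1) by blast
  then have zxm: "0 < z xm" using pos(2) by linarith
  have xm0: "xm \<noteq> 0" using zxm z01 by auto
  have xm1: "xm \<noteq> 1" using zxm z01 by auto
  have xmi: "0 < xm" "xm < 1" using xm xm0 xm1 by auto
  define d where "d = min xm (1 - xm)"
  have d: "0 < d" using xmi by (simp add: d_def)
  have dz: "DERIV z t :> z' t" "DERIV z' t :> (q t - l) * z t" if "0 < t" "t < 1" for t
    using zd that by auto
  have z'0: "z' xm = 0"
  proof (rule DERIV_local_max[OF dz(1)[OF xmi] d])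
    show "\<forall>y. \<bar>xm - y\<bar> < d \<longrightarrow> z y \<le> z xm"
    proof (intro allI impI)
      fix y assume "\<bar>xm - y\<bar> < d"
      then have "y \<in> {0..1}" unfolding d_def by (auto simp: abs_less_iff)
      then show "z y \<le> z xm" using xm(2) by blast
    qed
  qed
  have qx: "0 \<le> q xm" using qn xmi by auto
  have "0 < (q xm - l) * z xm" using qx l zxm by (intro mult_pos_pos) auto
  from DERIV_pos_inc_right[OF dz(2)[OF xmi] this]
  obtain e where e: "0 < e" "\<And>h. 0 < h \<Longrightarrow> h < e \<Longrightarrow> z' xm < z' (xm + h)" by blast
  define h where "h = min e d / 2"
  have h: "0 < h" "h < e" "h < d" using e d by (auto simp: h_def)
  have hh: "xm + h < 1" using h(3) by (simp add: d_def)
  have "\<exists>t. xm < t \<and> t < xm + h \<and> (z (xm + h) - z xm = (xm + h - xm) * z' t)"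
    by (rule MVT2) (use h(1) hh xmi dz(1) in auto)
  then obtain t where t: "xm < t" "t < xm + h" "z (xm + h) - z xm = (xm + h - xm) * z' t" by blast
  have "z' xm < z' (xm + (t - xm))" by (rule e(2)) (use t h in auto)
  then have "0 < z' t" using z'0 by simp
  then have "0 < h * z' t" using h by simp
  then have "z xm < z (xm + h)" using t by simp
  moreover have "xm + h \<in> {0..1}" using h hh xmi by auto
  then have "z (xm + h) \<le> z xm" using xm(2) by blast
  ultimately show False by linarith
qed

lemma eigen_nonneg:
  fixes q z :: "real \<Rightarrow> real"
  assumes qn: "\<forall>x\<in>{0<..<1}. 0 \<le> q x" and e: "is_eigenfun q l z"
  shows "0 \<le> l"
proof (rule ccontr)
  assume "\<not> 0 \<le> l"
  then have l: "l < 0" by simp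
  obtain z' x0 where zc: "continuous_on {0..1} z" and z01: "z 0 = 0" "z 1 = 0" and x0: "x0 \<in> {0..1}" "z x0 \<noteq> 0"
    and zd: "\<forall>x\<in>{0<..<1}. (z has_real_derivative z' x) (at x) \<and> (z' has_real_derivative (q x - l) * z x) (at x)"
    using e unfolding is_eigenfun_def by blast
  show False
  proof (cases "0 < z x0")
    case True
    then show False using eigen_pos_case[OF qn l zc z01 zd x0(1)] by blast
  next
    case False
    then have "0 < - z x0" using x0 by simp
    moreover have "\<forall>x\<in>{0<..<1}. ((\<lambda>t. - z t) has_real_derivative - z' x) (at x) \<and> ((\<lambda>t. - z' t) has_real_derivative (q x - l) * - z x) (at x)"
      using zd by (auto intro!: derivative_eq_intros)
    ultimately show False
      using eigen_pos_case[OF qn l continuous_on_minus[OF zc] _ _ _ x0(1), of "\<lambda>t. - z' t"] z01 by auto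
  qed
qed

lemma lambda0_le:
  fixes q z :: "real \<Rightarrow> real"
  assumes qn: "\<forall>x\<in>{0<..<1}. 0 \<le> q x" and e: "is_eigenfun q l z"
  shows "lambda0 q \<le> l"
  unfolding lambda0_def
proof (rule cInf_lower)
  show "l \<in> {lam. \<exists>y. is_eigenfun q lam y}" using e by blast
  show "bdd_below {lam. \<exists>y. is_eigenfun q lam y}"
    unfolding bdd_below_def using eigen_nonneg[OF qn] by blast
qed



lemma deriv_bdd:
  fixes y y' g :: "real \<Rightarrow> real"
  assumes d: "\<forall>x\<in>{0<..<1}. (y' has_real_derivative g x) (at x)" and gb: "\<forall>x\<in>{0<..<1}. \<bar>g x\<bar> \<le> L"
  shows "\<forall>x\<in>{0<..<1}. \<bar>y' x\<bar> \<le> \<bar>y' (1/2)\<bar> + L"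
proof
  fix x :: real assume x: "x \<in> {0<..<1}"
  have L0: "0 \<le> L" using gb[rule_format, of "1/2"] by auto
  have "\<bar>y' x - y' (1/2)\<bar> \<le> L"
  proof (cases "x < 1/2")
    case True
    obtain t where t: "x < t" "t < 1/2" "y' (1/2) - y' x = (1/2 - x) * g t"
      using MVT2[OF True, of y' g] d x by force
    have "\<bar>(1/2 - x) * g t\<bar> \<le> 1 * L" unfolding abs_mult
      by (rule mult_mono) (use x t gb True in auto)
    then show ?thesis using t by simp
  next
    case False
    show ?thesis
    proof (cases "x = 1/2")
      case True then have "x = 1/2" by simp
      then show ?thesis using L0 by (metis abs_zero diff_self)
    next
      case False2: False
      then have lt: "1/2 < x" using False by simp
      obtain t where t: "1/2 < t" "t < x" "y' x - y' (1/2) = (x - 1/2) * g t"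
        using MVT2[OF lt, of y' g] d x by force
      have "\<bar>(x - 1/2) * g t\<bar> \<le> 1 * L" unfolding abs_mult
        by (rule mult_mono) (use x t gb lt in auto)
      then show ?thesis using t by simp
    qed
  qed
  then show "\<bar>y' x\<bar> \<le> \<bar>y' (1/2)\<bar> + L" by linarith
qed



lemma eq_ends:
  fixes f g :: "real \<Rightarrow> real"
  assumes fc: "continuous_on {0..1} f" and gc: "continuous_on {0..1} g" and eq: "\<forall>x\<in>{0<..<1}. f x = g x"
  shows "f 0 = g 0" "f 1 = g 1"
proof -
  have ev0: "eventually (\<lambda>x. f x = g x) (at_right 0)"
    using eventually_at_right_real[of 0 1] eq by (auto elim: eventually_mono)
  have ev1: "eventually (\<lambda>x. f x = g x) (at_left 1)"
    using eventually_at_left_real[of 0 1] eq by (auto elim: eventually_mono)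
  have "(g \<longlongrightarrow> f 0) (at_right 0)"
    using Lim_transform_eventually[OF continuous_on_Icc_at_rightD[OF fc] ev0] by simp
  then show "f 0 = g 0" using tendsto_unique[OF trivial_limit_at_right_real continuous_on_Icc_at_rightD[OF gc]] by simp
  have "(g \<longlongrightarrow> f 1) (at_left 1)"
    using Lim_transform_eventually[OF continuous_on_Icc_at_leftD[OF fc] ev1] by simp
  then show "f 1 = g 1" using tendsto_unique[OF trivial_limit_at_left_real continuous_on_Icc_at_leftD[OF gc]] by simp
qed



lemma wronsk:
  fixes y y' U U' q :: "real \<Rightarrow> real"
  assumes yc: "continuous_on {0..1} y" and y0: "y 0 = 0"
   and yd: "\<forall>x\<in>{0<..<1}. (y has_real_derivative y' x) (at x) \<and> (y' has_real_derivative (q x - mu) * y x) (at x)"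
   and y'b: "\<forall>x\<in>{0<..<1}. \<bar>y' x\<bar> \<le> K1"
   and Uc: "continuous_on {0..1} U" and U0: "U 0 = 0"
   and Ud: "\<forall>x\<in>{0<..<1}. (U has_real_derivative U' x) (at x) \<and> (U' has_real_derivative (q x - mu) * U x) (at x)"
   and U'b: "\<forall>x\<in>{0<..<1}. \<bar>U' x\<bar> \<le> K2"
   and Upos: "\<forall>x\<in>{0<..<1}. 0 < U x"
  shows "\<exists>c. \<forall>x\<in>{0<..<1}. y x = c * U x"
proof -
  define W where "W t = y t * U' t - y' t * U t" for t
  have dW: "(W has_real_derivative 0) (at x within {0<..<1})" if x: "x \<in> {0<..<1}" for x
  proof -
    have "(W has_real_derivative (y' x * U' x + y x * ((q x - mu) * U x) - ((q x - mu) * y x * U x + y' x * U' x))) (at x)"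
      unfolding W_def using yd x Ud by (auto intro!: derivative_eq_intros)
    then show ?thesis by (simp add: algebra_simps has_field_derivative_at_within)
  qed
  obtain c0 where c0: "\<forall>x\<in>{0<..<1}. W x = c0"
    using has_field_derivative_zero_constant[OF convex_real_interval(8) dW] by blast
  have lim1: "(W \<longlongrightarrow> c0) (at_right 0)"
  proof -
    have "eventually (\<lambda>x. c0 = W x) (at_right 0)"
      using eventually_at_right_real[of 0 1] c0 by (auto elim: eventually_mono)
    then show ?thesis by (rule Lim_transform_eventually[OF tendsto_const])
  qed
  have lim2: "(W \<longlongrightarrow> 0) (at_right 0)"
  proof (rule Lim_null_comparison)
    show "eventually (\<lambda>x. norm (W x) \<le> \<bar>y x\<bar> * K2 + K1 * \<bar>U x\<bar>) (at_right 0)"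
      using eventually_at_right_real[OF zero_less_one]
    proof (rule eventually_mono)
      fix x assume x: "x \<in> {0<..<(1::real)}"
      have "norm (W x) \<le> \<bar>y x * U' x\<bar> + \<bar>y' x * U x\<bar>" unfolding W_def by simp
      also have "\<bar>y x * U' x\<bar> \<le> \<bar>y x\<bar> * K2" unfolding abs_mult
        by (rule mult_left_mono) (use U'b x in auto)
      also have "\<bar>y' x * U x\<bar> \<le> K1 * \<bar>U x\<bar>" unfolding abs_mult
        by (rule mult_right_mono) (use y'b x in auto)
      finally show "norm (W x) \<le> \<bar>y x\<bar> * K2 + K1 * \<bar>U x\<bar>" by simp
    qed
    have ly: "(y \<longlongrightarrow> 0) (at_right 0)" using continuous_on_Icc_at_rightD[OF yc] y0 by simp
    have lU: "(U \<longlongrightarrow> 0) (at_right 0)" using continuous_on_Icc_at_rightD[OF Uc] U0 by simp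
    have "((\<lambda>x. \<bar>y x\<bar> * K2 + K1 * \<bar>U x\<bar>) \<longlongrightarrow> \<bar>0\<bar> * K2 + K1 * \<bar>0\<bar>) (at_right 0)"
      by (intro tendsto_intros ly lU)
    then show "((\<lambda>x. \<bar>y x\<bar> * K2 + K1 * \<bar>U x\<bar>) \<longlongrightarrow> 0) (at_right 0)" by simp
  qed
  have c00: "c0 = 0" using tendsto_unique[OF trivial_limit_at_right_real lim1 lim2] .
  have dQ: "((\<lambda>t. y t / U t) has_real_derivative 0) (at x within {0<..<1})" if x: "x \<in> {0<..<1}" for x
  proof -
    have Ux: "U x \<noteq> 0" using Upos x by force
    have "((\<lambda>t. y t / U t) has_real_derivative (y' x * U x - y x * U' x) / (U x * U x)) (at x)"
      using yd Ud x Ux by (auto intro!: derivative_eq_intros simp: power2_eq_square)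
    moreover have "y' x * U x - y x * U' x = 0" using c0 c00 x by (simp add: W_def)
    ultimately show ?thesis by (simp add: has_field_derivative_at_within)
  qed
  obtain c where c: "\<forall>x\<in>{0<..<1}. y x / U x = c"
    using has_field_derivative_zero_constant[OF convex_real_interval(8) dQ] by blast
  have "\<forall>x\<in>{0<..<1}. y x = c * U x"
  proof
    fix x :: real assume x: "x \<in> {0<..<1}"
    have "U x \<noteq> 0" using Upos x by force
    moreover have "y x / U x = c" using c x by blast
    ultimately show "y x = c * U x" by (auto simp: field_simps)
  qed
  then show ?thesis by blast
qed



lemma within01_at:
  fixes f :: "real \<Rightarrow> real"
  assumes "x \<in> {0<..<1}" "(f has_real_derivative d) (at x within {0..1})"
  shows "(f has_real_derivative d) (at x)"
  using assms at_within_interior[of x "{0..1::real}"] by simp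

lemma interior_min_zero:
  fixes U U' :: "real \<Rightarrow> real"
  assumes s: "sol p U U'" and P: "\<And>x. x \<in> {0..1} \<Longrightarrow> \<bar>p x\<bar> \<le> P"
    and nn: "\<forall>x\<in>{0<..<1}. 0 \<le> U x" and x: "x \<in> {0<..<1}" and z: "U x = 0"
  shows False
proof -
  define d where "d = min x (1 - x)"
  have d: "0 < d" using x by (simp add: d_def)
  have dU: "DERIV U x :> U' x" using within01_at[OF x sol_D(1)[OF s]] x by auto
  have "U' x = 0"
  proof (rule DERIV_local_min[OF dU d])
    show "\<forall>y. \<bar>x - y\<bar> < d \<longrightarrow> U x \<le> U y"
    proof (intro allI impI)
      fix y assume "\<bar>x - y\<bar> < d"
      then have "y \<in> {0<..<1}" unfolding d_def by (auto simp: abs_less_iff)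
      then show "U x \<le> U y" using nn z by auto
    qed
  qed
  then show False using no_double_zero[OF s P _ z] x by auto
qed

lemma shoot:
  fixes p0 :: "real \<Rightarrow> real" and U U' :: "real \<Rightarrow> real \<Rightarrow> real"
  assumes sols: "\<And>l. sol (\<lambda>x. p0 x - l) (U l) (U' l)"
   and P: "\<And>x l. x\<in>{0..1} \<Longrightarrow> l\<in>{0..mu} \<Longrightarrow> \<bar>p0 x - l\<bar> \<le> P"
   and p0n: "\<And>x. x\<in>{0..1} \<Longrightarrow> 0 \<le> p0 x"
   and mu0: "0 \<le> mu"
   and notpos: "\<not> (\<forall>x\<in>{0<..1}. 0 < U mu x)"
  shows "\<exists>ls\<in>{0..mu}. U ls 1 = 0 \<and> (\<forall>x\<in>{0<..<1}. 0 < U ls x)"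
proof -
  have P0: "0 \<le> P" using P[of 0 0] mu0 by auto
  define B where "B = exp (1 + P)"
  define K where "K = sqrt (B * exp (2 + P))"
  have K0: "0 \<le> K" by (simp add: K_def B_def)
  have Pl: "\<And>x. x \<in> {0..1} \<Longrightarrow> \<bar>p0 x - l\<bar> \<le> P" if "l \<in> {0..mu}" for l using P that by blast
  have lip: "\<bar>U l x - U k x\<bar> \<le> K * \<bar>l - k\<bar>" if l: "l\<in>{0..mu}" and k: "k\<in>{0..mu}" and x: "x\<in>{0..1}" for l k x
  proof -
    have Bk: "(U k t)^2 \<le> B" if "t \<in> {0..1}" for t
      using energy_bound[OF sols Pl[OF k] that] unfolding B_def by (smt (verit) zero_le_power2)
    have "(U l x - U k x)^2 \<le> (l - k)^2 * B * exp (2 + P)"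
      by (rule sol_stab[OF sols sols Pl[OF l] Bk x])
    then have "sqrt ((U l x - U k x)^2) \<le> sqrt ((l - k)^2 * (B * exp (2 + P)))"
      by (intro real_sqrt_le_mono) (simp add: mult.assoc)
    then show ?thesis by (simp add: K_def real_sqrt_mult mult.commute)
  qed
  define x1 where "x1 = 1 / (2 * (P * exp (1 + P) + 1))"
  have PE: "0 \<le> P * exp (1 + P)" using P0 by simp
  have x1p: "0 < x1" unfolding x1_def using PE by simp
  have x11: "x1 \<le> 1" unfolding x1_def using PE by (simp add: field_simps)
  have near: "x / 2 \<le> U l x" if "l \<in> {0..mu}" "0 \<le> x" "x \<le> x1" for l x
    using sol_near0[OF sols Pl[OF that(1)]] that by (simp add: x1_def)
  have nearpos: "0 < U l x" if "l \<in> {0..mu}" "0 < x" "x \<le> x1" for l x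
    using near[of l x] that by simp
  define S where "S = {x1..1}"
  have S: "compact S" "S \<noteq> {}" using x11 by (auto simp: S_def)
  define m where "m l = Inf (U l ` S)" for l
  have matt: "\<exists>x\<in>S. U l x = m l \<and> (\<forall>t\<in>S. m l \<le> U l t)" for l
  proof -
    have "continuous_on S (U l)" using continuous_on_subset[OF sol_cont(1)[OF sols]] x1p by (auto simp: S_def)
    then obtain x where x: "x \<in> S" "\<forall>t\<in>S. U l x \<le> U l t"
      using continuous_attains_inf[OF S] by blast
    have "m l = U l x" unfolding m_def by (rule cInf_eq_minimum) (use x in auto)
    then show ?thesis using x by auto
  qed
  have Ssub: "S \<subseteq> {0..1}" using x1p by (auto simp: S_def)
  have mlip1: "m l \<le> m k + K * \<bar>l - k\<bar>" if "l\<in>{0..mu}" "k\<in>{0..mu}" for l k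
  proof -
    obtain x where x: "x \<in> S" "U k x = m k" using matt by blast
    have "m l \<le> U l x" using matt x(1) by blast
    also have "\<dots> \<le> U k x + K * \<bar>l - k\<bar>" using lip[OF that, of x] x Ssub by auto
    finally show ?thesis using x by simp
  qed
  have mlip: "dist (m l) (m k) \<le> K * dist l k" if "l\<in>{0..mu}" "k\<in>{0..mu}" for l k
    using mlip1[OF that] mlip1[OF that(2,1)] by (simp add: dist_real_def abs_minus_commute abs_le_iff)
  have mcont: "continuous_on {0..mu} m"
    by (rule lipschitz_on_continuous_on[of K], rule lipschitz_onI[OF mlip K0])
  define Z where "Z = {0..mu} \<inter> m -` {..0}"
  have Zc: "closed Z" unfolding Z_def by (rule continuous_closed_preimage[OF mcont]) auto
  have muZ: "mu \<in> Z"
  proof (rule ccontr)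
    assume "mu \<notin> Z"
    then have "0 < m mu" using mu0 by (auto simp: Z_def)
    then have "\<forall>x\<in>S. 0 < U mu x" using matt[of mu] by force
    moreover have "\<forall>x\<in>{0<..x1}. 0 < U mu x" using nearpos mu0 by auto
    ultimately have "\<forall>x\<in>{0<..1}. 0 < U mu x" unfolding S_def by force
    then show False using notpos by blast
  qed
  have Zb: "bdd_below Z" unfolding Z_def bdd_below_def by auto
  define ls where "ls = Inf Z"
  have lsZ: "ls \<in> Z" unfolding ls_def using closed_contains_Inf[OF _ Zb Zc] muZ by blast
  have ls: "ls \<in> {0..mu}" "m ls \<le> 0" using lsZ by (auto simp: Z_def)
  have m0: "0 < m 0"
  proof -
    obtain x where x: "x \<in> S" "U 0 x = m 0" using matt by blast
    have s0: "sol (\<lambda>x. p0 x - 0) (U 0) (U' 0)" by (rule sols)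
    have "0 < U 0 x"
      by (rule sol_pos[OF s0 Pl[of 0]]) (use mu0 p0n x x1p in \<open>auto simp: S_def\<close>)
    then show ?thesis using x by simp
  qed
  have lsp: "0 < ls" using ls m0 by (cases "ls = 0") auto
  have below: "0 < m l" if "0 \<le> l" "l < ls" for l
  proof (rule ccontr)
    assume "\<not> 0 < m l"
    then have "l \<in> Z" using that ls by (auto simp: Z_def)
    then have "ls \<le> l" unfolding ls_def by (rule cInf_lower[OF _ Zb])
    then show False using that by simp
  qed
  have mls: "0 \<le> m ls"
  proof (rule ccontr)
    assume "\<not> 0 \<le> m ls"
    then have neg: "m ls < 0" by simp
    define e where "e = - m ls / (2 * (K + 1))"
    have e: "0 < e" unfolding e_def using neg K0 by (intro divide_pos_pos) auto
    define l where "l = max 0 (ls - e)"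
    have l: "0 \<le> l" "l < ls" "l \<in> {0..mu}" using lsp e ls by (auto simp: l_def)
    have lsl: "\<bar>l - ls\<bar> \<le> e" using e lsp by (auto simp: l_def)
    have "m l \<le> m ls + K * \<bar>l - ls\<bar>" by (rule mlip1[OF l(3) ls(1)])
    also have "K * \<bar>l - ls\<bar> \<le> K * e" using lsl K0 by (simp add: mult_left_mono)
    also have "K * e \<le> - m ls / 2"
    proof -
      have "K * e = (K / (K + 1)) * (- m ls / 2)" using K0 by (simp add: e_def field_simps)
      also have "\<dots> \<le> 1 * (- m ls / 2)"
        by (rule mult_right_mono) (use K0 neg in auto)
      finally show ?thesis by simp
    qed
    finally have "m l < 0" using neg by linarith
    then show False using below[OF l(1,2)] by simp
  qed
  have mls0: "m ls = 0" using mls ls by simp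
  obtain x0 where x0: "x0 \<in> S" "U ls x0 = 0" and geS: "\<forall>t\<in>S. 0 \<le> U ls t"
    using matt[of ls] mls0 by auto
  have nn: "\<forall>x\<in>{0<..<1}. 0 \<le> U ls x"
  proof
    fix x :: real assume x: "x \<in> {0<..<1}"
    show "0 \<le> U ls x"
    proof (cases "x \<le> x1")
      case True then show ?thesis using nearpos[OF ls(1), of x] x by auto
    next
      case False then show ?thesis using geS x by (auto simp: S_def)
    qed
  qed
  have pos: "\<forall>x\<in>{0<..<1}. 0 < U ls x"
  proof
    fix x :: real assume x: "x \<in> {0<..<1}"
    show "0 < U ls x"
    proof (rule ccontr)
      assume "\<not> 0 < U ls x"
      then have "U ls x = 0" using nn x by force
      then show False using interior_min_zero[OF sols Pl[OF ls(1)] nn x] by blast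
    qed
  qed
  have "x0 = 1"
  proof (rule ccontr)
    assume "x0 \<noteq> 1"
    then have "x0 \<in> {0<..<1}" using x0 x1p by (auto simp: S_def)
    then show False using pos x0 by force
  qed
  then show ?thesis using ls x0 pos by blast
qed



lemma eig_nontriv:
  assumes "is_eigenfun q l y"
  shows "\<exists>x\<in>{0<..<1}. y x \<noteq> 0"
proof -
  obtain x where x: "x \<in> {0..1}" "y x \<noteq> 0" and "y 0 = 0" "y 1 = 0"
    using assms unfolding is_eigenfun_def by blast
  then have "x \<in> {0<..<1}" by (cases "x = 0"; cases "x = 1") auto
  then show ?thesis using x by blast
qed

lemma ground_pos:
  fixes q y :: "real \<Rightarrow> real"
  assumes qc: "continuous_on {0<..<1} q" and ab: "0 < a" "a \<le> b" "b < 1"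
    and qz: "\<forall>x\<in>{0<..<1} - {a..b}. q x = 0" and qn: "\<forall>x\<in>{0<..<1}. 0 \<le> q x"
    and e: "is_eigenfun q mu y" and mumin: "\<And>l z. is_eigenfun q l z \<Longrightarrow> mu \<le> l"
  shows "\<exists>s. (s = 1 \<or> s = -1) \<and> (\<forall>x\<in>{0<..<1}. 0 < s * y x)"
proof -
  have mu0: "0 \<le> mu" by (rule eigen_nonneg[OF qn e])
  obtain y' where yc: "continuous_on {0..1} y" and y01: "y 0 = 0" "y 1 = 0"
    and yd: "\<forall>x\<in>{0<..<1}. (y has_real_derivative y' x) (at x) \<and> (y' has_real_derivative (q x - mu) * y x) (at x)"
    using e unfolding is_eigenfun_def by blast
  obtain xn where xn: "xn \<in> {0<..<1}" "y xn \<noteq> 0" using eig_nontriv[OF e] by blast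
  define p0 where "p0 = (\<lambda>x. if x \<in> {0<..<1} then q x else (0::real))"
  have pc: "continuous_on {0..1} p0" unfolding p0_def by (rule p0_cont[OF qc ab qz])
  have p0n: "\<And>x. x \<in> {0..1} \<Longrightarrow> 0 \<le> p0 x" using qn by (auto simp: p0_def)
  have p0q: "\<And>x. x \<in> {0<..<1} \<Longrightarrow> p0 x = q x" by (simp add: p0_def)
  obtain P0 where P0: "\<And>x. x \<in> {0..1} \<Longrightarrow> \<bar>p0 x\<bar> \<le> P0"
    using compact_imp_bounded[OF compact_continuous_image[OF pc compact_Icc]]
    unfolding bounded_iff by force
  define P where "P = P0 + mu"
  have P: "\<bar>p0 x - l\<bar> \<le> P" if "x\<in>{0..1}" "l\<in>{0..mu}" for x l
    using P0[OF that(1)] that(2) unfolding P_def by auto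
  have ex: "\<forall>l. \<exists>u u'. sol (\<lambda>x. p0 x - l) u u'"
  proof
    fix l
    have "continuous_on {0..1} (\<lambda>x. p0 x - l)" by (intro continuous_intros pc)
    from ode_exists[OF this] show "\<exists>u u'. sol (\<lambda>x. p0 x - l) u u'" unfolding sol_def by blast
  qed
  then obtain U where "\<forall>l. \<exists>u'. sol (\<lambda>x. p0 x - l) (U l) u'" by metis
  then obtain U' where sols: "\<And>l. sol (\<lambda>x. p0 x - l) (U l) (U' l)" by metis
  have Ud: "\<forall>x\<in>{0<..<1}. (U l has_real_derivative U' l x) (at x) \<and> (U' l has_real_derivative (q x - l) * U l x) (at x)" for l
  proof
    fix x :: real assume x: "x \<in> {0<..<1}"
    then have x1: "x \<in> {0..1}" by auto
    show "(U l has_real_derivative U' l x) (at x) \<and> (U' l has_real_derivative (q x - l) * U l x) (at x)"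
      using within01_at[OF x sol_D(1)[OF sols x1]] within01_at[OF x sol_D(2)[OF sols x1]] p0q[OF x] by simp
  qed
  obtain Y where Y: "\<And>x. x \<in> {0..1} \<Longrightarrow> \<bar>y x\<bar> \<le> Y"
    using compact_imp_bounded[OF compact_continuous_image[OF yc compact_Icc]]
    unfolding bounded_iff by force
  have gb: "\<forall>x\<in>{0<..<1}. \<bar>(q x - mu) * y x\<bar> \<le> P * Y"
  proof
    fix x :: real assume x: "x \<in> {0<..<1}"
    have "\<bar>(q x - mu) * y x\<bar> = \<bar>p0 x - mu\<bar> * \<bar>y x\<bar>" using p0q[OF x] by (simp add: abs_mult)
    also have "\<dots> \<le> P * Y" by (rule mult_mono) (use P[of x mu] Y[of x] x mu0 in auto)
    finally show "\<bar>(q x - mu) * y x\<bar> \<le> P * Y" .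
  qed
  have y'b: "\<forall>x\<in>{0<..<1}. \<bar>y' x\<bar> \<le> \<bar>y' (1/2)\<bar> + P * Y"
    by (rule deriv_bdd) (use yd gb in auto)
  obtain K2 where K2: "\<And>x. x \<in> {0..1} \<Longrightarrow> \<bar>U' mu x\<bar> \<le> K2"
    using compact_imp_bounded[OF compact_continuous_image[OF sol_cont(2)[OF sols] compact_Icc]]
    unfolding bounded_iff by force
  have U0: "U l 0 = 0" for l using sols[of l] by (simp add: sol_def)
  have wr: "\<exists>c. \<forall>x\<in>{0<..<1}. y x = c * U mu x" if pos: "\<forall>x\<in>{0<..<1}. 0 < U mu x"
  proof -
    have U'b: "\<forall>x\<in>{0<..<1}. \<bar>U' mu x\<bar> \<le> K2" using K2 by auto
    show ?thesis by (rule wronsk[OF yc y01(1) yd y'b sol_cont(1)[OF sols] U0 Ud U'b pos])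
  qed
  have notpos: "\<not> (\<forall>x\<in>{0<..1}. 0 < U mu x)"
  proof
    assume pos: "\<forall>x\<in>{0<..1}. 0 < U mu x"
    then obtain c where c: "\<forall>x\<in>{0<..<1}. y x = c * U mu x" using wr by force
    have "y 1 = c * U mu 1"
      by (rule eq_ends(2)[OF yc _ c]) (intro continuous_intros sol_cont(1)[OF sols])
    moreover have "0 < U mu 1" using pos by auto
    ultimately have "c = 0" using y01 by simp
    then show False using c xn by auto
  qed
  obtain ls where ls: "ls \<in> {0..mu}" "U ls 1 = 0" "\<forall>x\<in>{0<..<1}. 0 < U ls x"
    using shoot[OF sols P p0n mu0 notpos] by blast
  have "is_eigenfun q ls (U ls)"
    unfolding is_eigenfun_def
  proof (intro conjI)
    show "continuous_on {0..1} (U ls)" by (rule sol_cont(1)[OF sols])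
    show "U ls 0 = 0" by (rule U0)
    show "U ls 1 = 0" by (rule ls(2))
    have "0 < U ls (1/2)" using ls(3) by auto
    then show "\<exists>x\<in>{0..1}. U ls x \<noteq> 0" by (intro bexI[of _ "1/2"]) auto
    show "\<exists>y'. \<forall>x\<in>{0<..<1}. (U ls has_real_derivative y' x) (at x) \<and> (y' has_real_derivative (q x - ls) * U ls x) (at x)"
      using Ud by blast
  qed
  then have "mu \<le> ls" by (rule mumin)
  then have "ls = mu" using ls(1) by simp
  then obtain c where c: "\<forall>x\<in>{0<..<1}. y x = c * U mu x" using wr ls(3) by force
  have c0: "c \<noteq> 0" using c xn by auto
  define s where "s = sgn c"
  have "s = 1 \<or> s = -1" using c0 by (auto simp: s_def sgn_if)
  moreover have "\<forall>x\<in>{0<..<1}. 0 < s * y x"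
  proof
    fix x :: real assume x: "x \<in> {0<..<1}"
    have "s * y x = \<bar>c\<bar> * U mu x" using c x by (simp add: s_def sgn_mult_self_eq abs_sgn mult.assoc[symmetric] sgn_mult_abs)
    then show "0 < s * y x" using c0 ls(3) x \<open>ls = mu\<close> by simp
  qed
  ultimately show ?thesis by blast
qed



lemma tendsto_mult_bound0:
  fixes y h :: "real \<Rightarrow> real"
  assumes ly: "(y \<longlongrightarrow> 0) F" and ev: "eventually (\<lambda>x. \<bar>h x\<bar> \<le> \<bar>y x\<bar> * K) F"
  shows "(h \<longlongrightarrow> 0) F"
proof (rule Lim_null_comparison)
  show "eventually (\<lambda>x. norm (h x) \<le> \<bar>y x\<bar> * K) F" using ev by simp
  have "((\<lambda>x. \<bar>y x\<bar> * K) \<longlongrightarrow> \<bar>0\<bar> * K) F" by (intro tendsto_intros ly)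
  then show "((\<lambda>x. \<bar>y x\<bar> * K) \<longlongrightarrow> 0) F" by simp
qed

lemma energy_identity:
  fixes p0 y y' :: "real \<Rightarrow> real"
  assumes yc: "continuous_on {0..1} y" and y01: "y 0 = 0" "y 1 = 0"
    and yd: "\<forall>x\<in>{0<..<1}. (y has_real_derivative y' x) (at x) \<and> (y' has_real_derivative (p0 x - mu) * y x) (at x)"
    and y'b: "\<forall>x\<in>{0<..<1}. \<bar>y' x\<bar> \<le> K"
  shows "((\<lambda>x. (y' x)^2 + (p0 x - mu) * (y x)^2) has_integral 0) {0..1}"
proof -
  define h where "h x = (if x \<in> {0<..<1} then y x * y' x else 0)" for x
  have dh: "(h has_real_derivative (y' x)^2 + (p0 x - mu) * (y x)^2) (at x)" if x: "x \<in> {0<..<1}" for x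
  proof -
    have "((\<lambda>t. y t * y' t) has_real_derivative (y' x * y' x + y x * ((p0 x - mu) * y x))) (at x)"
      using yd x by (auto intro!: derivative_eq_intros)
    then have "((\<lambda>t. y t * y' t) has_real_derivative (y' x)^2 + (p0 x - mu) * (y x)^2) (at x)"
      by (simp add: power2_eq_square algebra_simps)
    then show ?thesis
      by (rule has_field_derivative_transform_within_open[where S="{0<..<1}"]) (use x in \<open>auto simp: h_def\<close>)
  qed
  have ev0: "eventually (\<lambda>x. \<bar>h x\<bar> \<le> \<bar>y x\<bar> * K) (at_right 0)"
    using eventually_at_right_real[OF zero_less_one]
  proof (rule eventually_mono)
    fix x :: real assume x: "x \<in> {0<..<1}"
    show "\<bar>h x\<bar> \<le> \<bar>y x\<bar> * K" using x y'b by (auto simp: h_def abs_mult intro: mult_left_mono)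
  qed
  have ev1: "eventually (\<lambda>x. \<bar>h x\<bar> \<le> \<bar>y x\<bar> * K) (at_left 1)"
    using eventually_at_left_real[OF zero_less_one]
  proof (rule eventually_mono)
    fix x :: real assume x: "x \<in> {0<..<1}"
    show "\<bar>h x\<bar> \<le> \<bar>y x\<bar> * K" using x y'b by (auto simp: h_def abs_mult intro: mult_left_mono)
  qed
  have hc: "continuous_on {0..1} h"
  proof (rule continuous_on_IccI)
    have h0: "h 0 = 0" by (simp add: h_def)
    have "(y \<longlongrightarrow> 0) (at_right 0)" using continuous_on_Icc_at_rightD[OF yc] y01 by simp
    from tendsto_mult_bound0[OF this ev0] show "(h \<longlongrightarrow> h 0) (at_right 0)" by (simp only: h0)
    have h1: "h 1 = 0" by (simp add: h_def)
    have "(y \<longlongrightarrow> 0) (at_left 1)" using continuous_on_Icc_at_leftD[OF yc] y01 by simp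
    from tendsto_mult_bound0[OF this ev1] show "(h \<longlongrightarrow> h 1) (at_left 1)" by (simp only: h1)
    fix x :: real assume "0 < x" "x < 1"
    then have "isCont h x" using dh[of x] DERIV_isCont by auto
    then show "h \<midarrow>x\<rightarrow> h x" by (simp add: isCont_def)
  qed simp
  have "((\<lambda>x. (y' x)^2 + (p0 x - mu) * (y x)^2) has_integral (h 1 - h 0)) {0..1}"
    by (rule fundamental_theorem_of_calculus_interior[OF _ hc])
       (use dh in \<open>auto simp: has_real_derivative_iff_has_vector_derivative[symmetric]\<close>)
  then show ?thesis by (simp add: h_def)
qed

lemma energy_bound_y:
  fixes p0 y y' :: "real \<Rightarrow> real"
  assumes pc: "continuous_on {0..1} p0" and p0n: "\<forall>x\<in>{0..1}. 0 \<le> p0 x"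
    and yc: "continuous_on {0..1} y" and y01: "y 0 = 0" "y 1 = 0"
    and yd: "\<forall>x\<in>{0<..<1}. (y has_real_derivative y' x) (at x) \<and> (y' has_real_derivative (p0 x - mu) * y x) (at x)"
    and y'b: "\<forall>x\<in>{0<..<1}. \<bar>y' x\<bar> \<le> K"
    and nrm: "integral {0..1} (\<lambda>x. (y x)^2) = 1"
  shows "(\<lambda>x. (y' x)^2) integrable_on {0..1}"
    "integral {0..1} (\<lambda>x. (y' x)^2) = mu - integral {0..1} (\<lambda>x. p0 x * (y x)^2)"
    "integral {0..1} (\<lambda>x. (y' x)^2) \<le> mu"
proof -
  have E: "((\<lambda>x. (y' x)^2 + (p0 x - mu) * (y x)^2) has_integral 0) {0..1}"
    by (rule energy_identity[OF yc y01 yd y'b])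
  have i1: "(\<lambda>x. (p0 x - mu) * (y x)^2) integrable_on {0..1}"
    by (intro integrable_continuous_real continuous_intros pc yc)
  have i2: "(\<lambda>x. p0 x * (y x)^2) integrable_on {0..1}"
    by (intro integrable_continuous_real continuous_intros pc yc)
  have i3: "(\<lambda>x. (y x)^2) integrable_on {0..1}"
    by (intro integrable_continuous_real continuous_intros yc)
  have "((\<lambda>x. ((y' x)^2 + (p0 x - mu) * (y x)^2) - (p0 x - mu) * (y x)^2) has_integral (0 - integral {0..1} (\<lambda>x. (p0 x - mu) * (y x)^2))) {0..1}"
    by (rule has_integral_diff[OF E integrable_integral[OF i1]])
  then have H: "((\<lambda>x. (y' x)^2) has_integral (- integral {0..1} (\<lambda>x. (p0 x - mu) * (y x)^2))) {0..1}" by simp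
  then show "(\<lambda>x. (y' x)^2) integrable_on {0..1}" by blast
  have "integral {0..1} (\<lambda>x. (p0 x - mu) * (y x)^2) = integral {0..1} (\<lambda>x. p0 x * (y x)^2 - mu * (y x)^2)"
    by (simp add: algebra_simps)
  also have "\<dots> = integral {0..1} (\<lambda>x. p0 x * (y x)^2) - mu * integral {0..1} (\<lambda>x. (y x)^2)"
    using integral_diff[OF i2 integrable_on_cmult_left[OF i3, of mu]] by simp
  finally have eq: "integral {0..1} (\<lambda>x. (p0 x - mu) * (y x)^2) = integral {0..1} (\<lambda>x. p0 x * (y x)^2) - mu"
    using nrm by simp
  show "integral {0..1} (\<lambda>x. (y' x)^2) = mu - integral {0..1} (\<lambda>x. p0 x * (y x)^2)"
    using integral_unique[OF H] eq by simp
  moreover have "0 \<le> integral {0..1} (\<lambda>x. p0 x * (y x)^2)"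
    by (rule integral_nonneg[OF i2]) (use p0n in auto)
  ultimately show "integral {0..1} (\<lambda>x. (y' x)^2) \<le> mu" by simp
qed

lemma sup_bound_y:
  fixes y y' :: "real \<Rightarrow> real"
  assumes yc: "continuous_on {0..1} y" and y0: "y 0 = 0"
    and yd: "\<forall>x\<in>{0<..<1}. (y has_real_derivative y' x) (at x)"
    and i': "(\<lambda>x. (y' x)^2) integrable_on {0..1}"
    and E: "integral {0..1} (\<lambda>x. (y x)^2) + integral {0..1} (\<lambda>x. (y' x)^2) \<le> C"
    and x: "x \<in> {0..1}"
  shows "(y x)^2 \<le> C"
proof -
  have i3: "(\<lambda>x. (y x)^2) integrable_on {0..1}"
    by (intro integrable_continuous_real continuous_intros yc)
  have iS: "(\<lambda>t. (y t)^2 + (y' t)^2) integrable_on {0..1}" by (rule integrable_add[OF i3 i'])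
  have sub: "{0..x} \<subseteq> {0..1}" using x by auto
  have F: "((\<lambda>t. 2 * y t * y' t) has_integral ((y x)^2 - (y 0)^2)) {0..x}"
  proof (rule fundamental_theorem_of_calculus_interior)
    show "0 \<le> x" using x by simp
    show "continuous_on {0..x} (\<lambda>t. (y t)^2)" by (intro continuous_intros continuous_on_subset[OF yc sub])
    fix t assume t: "t \<in> {0<..<x}"
    then have "t \<in> {0<..<1}" using x by auto
    then have "((\<lambda>t. (y t)^2) has_real_derivative 2 * y t * y' t) (at t)"
      using yd by (auto intro!: derivative_eq_intros)
    then show "((\<lambda>t. (y t)^2) has_vector_derivative 2 * y t * y' t) (at t)"
      by (simp add: has_real_derivative_iff_has_vector_derivative)
  qed
  have "(y x)^2 = integral {0..x} (\<lambda>t. 2 * y t * y' t)" using integral_unique[OF F] y0 by simp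
  also have "\<dots> \<le> integral {0..x} (\<lambda>t. (y t)^2 + (y' t)^2)"
  proof (rule integral_le)
    show "(\<lambda>t. 2 * y t * y' t) integrable_on {0..x}" using F by blast
    show "(\<lambda>t. (y t)^2 + (y' t)^2) integrable_on {0..x}" by (rule integrable_on_subinterval[OF iS sub])
    fix t show "2 * y t * y' t \<le> (y t)^2 + (y' t)^2" using abs_2xy[of "y t" "y' t"] by linarith
  qed
  also have "\<dots> \<le> integral {0..1} (\<lambda>t. (y t)^2 + (y' t)^2)"
    by (rule integral_subset_le[OF sub integrable_on_subinterval[OF iS sub] iS]) auto
  also have "\<dots> = integral {0..1} (\<lambda>x. (y x)^2) + integral {0..1} (\<lambda>x. (y' x)^2)"
    by (rule integral_add[OF i3 i'])
  finally show ?thesis using E by linarith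
qed



lemma int_phi2: "((\<lambda>x. ((x - 1/4) * (3/4 - x))^2) has_integral 1/960) {1/4..3/4::real}"
proof -
  have "((\<lambda>x::real. ((x - 1/4) * (3/4 - x))^2) has_integral
     (((3/4 - 1/2)^5/5 - (3/4-1/2)^3/24 + (3/4)/256) - ((1/4 - 1/2)^5/5 - (1/4-1/2)^3/24 + (1/4)/256))) {1/4..3/4}"
  proof (rule fundamental_theorem_of_calculus)
    fix x :: real assume "x \<in> {1/4..3/4}"
    have "((\<lambda>x. (x - 1/2)^5/5 - (x-1/2)^3/24 + x/256) has_real_derivative
       (5 * (x - 1/2)^4 / 5 - 3 * (x - 1/2)^2 / 24 + 1/256)) (at x within {1/4..3/4})"
      by (rule derivative_eq_intros refl | simp)+
    moreover have "5 * (x - 1/2)^4 / 5 - 3 * (x - 1/2)^2 / 24 + 1/256 = ((x - 1/4) * (3/4 - x))^2"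
      by (simp add: eval_nat_numeral field_simps)
    ultimately show "((\<lambda>x. (x - 1/2)^5/5 - (x-1/2)^3/24 + x/256) has_vector_derivative ((x - 1/4) * (3/4 - x))^2) (at x within {1/4..3/4})"
      by (simp add: has_real_derivative_iff_has_vector_derivative)
  qed simp
  then show ?thesis by (simp add: eval_nat_numeral)
qed

lemma int_dphi2: "((\<lambda>x. (1 - 2 * x)^2) has_integral 1/24) {1/4..3/4::real}"
proof -
  have "((\<lambda>x::real. (1 - 2 * x)^2) has_integral ((2 * (3/4) - 1)^3/6 - (2 * (1/4) - 1)^3/6)) {1/4..3/4}"
  proof (rule fundamental_theorem_of_calculus)
    fix x :: real assume "x \<in> {1/4..3/4}"
    have "((\<lambda>x. (2 * x - 1)^3/6) has_real_derivative (3 * (2 * x - 1)^2 * 2 / 6)) (at x within {1/4..3/4})"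
      by (rule derivative_eq_intros refl | simp)+
    moreover have "3 * (2 * x - 1)^2 * 2 / 6 = (1 - 2 * x)^2" by (simp add: power2_eq_square field_simps)
    ultimately show "((\<lambda>x. (2 * x - 1)^3/6) has_vector_derivative (1 - 2 * x)^2) (at x within {1/4..3/4})"
      by (simp add: has_real_derivative_iff_has_vector_derivative)
  qed simp
  then show ?thesis by (simp add: eval_nat_numeral)
qed

lemma deriv_cont_on:
  fixes y y' :: "real \<Rightarrow> real"
  assumes yd: "\<forall>x\<in>{0<..<1}. (y has_real_derivative y' x) (at x)" and sub: "S \<subseteq> {0<..<1}"
  shows "continuous_on S y"
  by (rule continuous_at_imp_continuous_on) (use yd sub DERIV_isCont in blast)

lemma picone_bound:
  fixes p0 y y' :: "real \<Rightarrow> real"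
  assumes pc: "continuous_on {0..1} p0" and p0n: "\<forall>x\<in>{0..1}. 0 \<le> p0 x"
    and ypos: "\<forall>x\<in>{0<..<1}. 0 < y x"
    and yd: "\<forall>x\<in>{0<..<1}. (y has_real_derivative y' x) (at x) \<and> (y' has_real_derivative (p0 x - mu) * y x) (at x)"
    and Q: "integral {1/4..3/4} p0 \<le> Q"
  shows "mu \<le> 960 * (1/24 + Q/256)"
proof -
  define I where "I = {1/4..3/4::real}"
  have I: "I \<subseteq> {0<..<1}" by (auto simp: I_def)
  define \<phi> where "\<phi> x = (x - 1/4) * (3/4 - x)" for x :: real
  define h where "h t = (\<phi> t)^2 * (y' t / y t)" for t
  define h' where "h' t = (\<phi> t)^2 * ((((p0 t - mu) * y t) * y t - y' t * y' t) / (y t * y t)) + 2 * \<phi> t * (1 - 2 * t) * (y' t / y t)" for t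
  define R where "R t = (1 - 2 * t - \<phi> t * y' t / y t)^2" for t
  have dh: "(h has_real_derivative h' t) (at t within I)" if t: "t \<in> I" for t
  proof -
    have t01: "t \<in> {0<..<1}" using t I by auto
    have yt: "y t \<noteq> 0" using ypos t01 by force
    have d1: "((\<lambda>t. (\<phi> t)^2) has_real_derivative 2 * \<phi> t * (1 - 2 * t)) (at t)"
    proof -
      have "((\<lambda>t. (\<phi> t)^2) has_real_derivative (2 * \<phi> t * ((3/4 - t) - (t - 1/4)))) (at t)"
        unfolding \<phi>_def by (rule derivative_eq_intros refl | simp)+
      then show ?thesis by simp
    qed
    have yd1: "DERIV y t :> y' t" and yd2: "DERIV y' t :> (p0 t - mu) * y t" using yd t01 by auto
    have d2: "((\<lambda>t. y' t / y t) has_real_derivative ((((p0 t - mu) * y t) * y t - y' t * y' t) / (y t * y t))) (at t)"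
      by (rule DERIV_divide[OF yd2 yd1 yt])
    have "(h has_real_derivative h' t) (at t)"
      unfolding h_def[abs_def] h'_def by (rule DERIV_mult'[OF d1 d2])
    then show ?thesis by (simp add: has_field_derivative_at_within)
  qed
  have F: "(h' has_integral (h (3/4) - h (1/4))) I"
    unfolding I_def by (rule fundamental_theorem_of_calculus) (use dh in \<open>auto simp: I_def has_real_derivative_iff_has_vector_derivative[symmetric]\<close>)
  have hend: "h (3/4) = 0" "h (1/4) = 0" by (auto simp: h_def \<phi>_def)
  have yc: "continuous_on I y" by (rule deriv_cont_on[OF _ I]) (use yd in auto)
  have y'c: "continuous_on I y'" by (rule deriv_cont_on[OF _ I]) (use yd in auto)
  have yne: "\<forall>t\<in>I. y t \<noteq> 0" using ypos I by force
  have Rc: "continuous_on I R" unfolding R_def \<phi>_def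
    by (intro continuous_intros yc y'c) (use yne in auto)
  have Ri: "(R has_integral integral I R) I"
    by (rule integrable_integral) (use integrable_continuous_real[OF Rc[unfolded I_def]] in \<open>simp add: I_def\<close>)
  have R0: "0 \<le> integral I R" by (rule has_integral_nonneg[OF Ri]) (simp add: R_def)
  have sum: "((\<lambda>t. h' t + R t) has_integral (0 + integral I R)) I"
    using has_integral_add[OF F Ri] hend by simp
  have eqf: "h' t + R t = (1 - 2 * t)^2 + p0 t * (\<phi> t)^2 - mu * (\<phi> t)^2" if t: "t \<in> I" for t
  proof -
    have yt: "y t \<noteq> 0" using yne t by blast
    show ?thesis unfolding h'_def R_def using yt by (simp add: field_simps power2_eq_square)
  qed
  have G: "((\<lambda>t. (1 - 2 * t)^2 + p0 t * (\<phi> t)^2 - mu * (\<phi> t)^2) has_integral integral I R) I"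
    using has_integral_eq[OF eqf sum] by simp
  have pphi: "(\<lambda>t. p0 t * (\<phi> t)^2) integrable_on I"
    unfolding I_def \<phi>_def by (intro integrable_continuous_real continuous_intros continuous_on_subset[OF pc]) auto
  have p0I: "p0 integrable_on I"
    unfolding I_def by (intro integrable_continuous_real continuous_on_subset[OF pc]) auto
  have phi2: "((\<lambda>t. (\<phi> t)^2) has_integral 1/960) I" unfolding I_def \<phi>_def by (rule int_phi2)
  have dphi2: "((\<lambda>t. (1 - 2 * t)^2) has_integral 1/24) I" unfolding I_def by (rule int_dphi2)
  have G2: "((\<lambda>t. (1 - 2 * t)^2 + p0 t * (\<phi> t)^2 - mu * (\<phi> t)^2) has_integral
      (1/24 + integral I (\<lambda>t. p0 t * (\<phi> t)^2) - mu * (1/960))) I"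
    by (intro has_integral_diff has_integral_add dphi2 integrable_integral pphi has_integral_mult_right phi2)
  have eqI: "integral I R = 1/24 + integral I (\<lambda>t. p0 t * (\<phi> t)^2) - mu / 960"
    using has_integral_unique[OF G G2] by simp
  have "integral I (\<lambda>t. p0 t * (\<phi> t)^2) \<le> integral I (\<lambda>t. p0 t * (1/256))"
  proof (rule integral_le[OF pphi])
    show "(\<lambda>t. p0 t * (1/256)) integrable_on I" by (rule integrable_on_mult_left[OF p0I])
    fix t assume t: "t \<in> I"
    have t1: "0 \<le> t - 1/4" "0 \<le> 3/4 - t" using t unfolding I_def by auto
    have f0: "0 \<le> \<phi> t" unfolding \<phi>_def using t1 by (rule mult_nonneg_nonneg)
    have "\<phi> t = 1/16 - (t - 1/2)^2" unfolding \<phi>_def by (simp add: power2_eq_square field_simps)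
    then have f1: "\<phi> t \<le> 1/16" by simp
    note f0 f1
    have "(\<phi> t)^2 \<le> (1/16)^2" by (rule power_mono[OF f1 f0])
    then show "p0 t * (\<phi> t)^2 \<le> p0 t * (1/256)" using p0n t unfolding I_def
      by (intro mult_left_mono) (auto simp: power2_eq_square)
  qed
  also have "\<dots> = integral I p0 / 256" by simp
  also have "\<dots> \<le> Q / 256" using Q by (simp add: I_def)
  finally have "integral I (\<lambda>t. p0 t * (\<phi> t)^2) \<le> Q / 256" .
  then show ?thesis using R0 eqI by simp
qed



lemma sine_identity:
  fixes p0 y y' :: "real \<Rightarrow> real"
  assumes pc: "continuous_on {0..1} p0"
    and ynn: "\<forall>x\<in>{0<..<1}. 0 \<le> y x"
    and yd: "\<forall>x\<in>{0<..<1}. (y has_real_derivative y' x) (at x) \<and> (y' has_real_derivative (p0 x - mu) * y x) (at x)"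
    and e0: "0 < \<eta>" and e1: "\<eta> < 1/2"
  shows "(mu - (pi/(1-2*\<eta>))^2) * integral {\<eta>..1-\<eta>} (\<lambda>x. y x * sin (pi/(1-2*\<eta>) * (x - \<eta>)))
     \<le> integral {\<eta>..1-\<eta>} (\<lambda>x. p0 x * y x * sin (pi/(1-2*\<eta>) * (x - \<eta>)))"
proof -
  define w where "w = pi/(1-2*\<eta>)"
  define J where "J = {\<eta>..1-\<eta>}"
  have J: "J \<subseteq> {0<..<1}" using e0 e1 by (auto simp: J_def)
  have Jle: "\<eta> \<le> 1 - \<eta>" using e1 by simp
  define h where "h t = y' t * sin (w * (t - \<eta>)) - y t * (w * cos (w * (t - \<eta>)))" for t
  define h' where "h' t = (p0 t - mu + w^2) * y t * sin (w * (t - \<eta>))" for t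
  have dh: "(h has_real_derivative h' t) (at t within J)" if t: "t \<in> J" for t
  proof -
    have t01: "t \<in> {0<..<1}" using t J by auto
    have yd1: "DERIV y t :> y' t" and yd2: "DERIV y' t :> (p0 t - mu) * y t" using yd t01 by auto
    have "(h has_real_derivative h' t) (at t)"
      unfolding h_def h'_def
      by (rule derivative_eq_intros yd1 yd2 refl | simp add: algebra_simps power2_eq_square)+
    then show ?thesis by (simp add: has_field_derivative_at_within)
  qed
  have F: "(h' has_integral (h (1-\<eta>) - h \<eta>)) J"
    unfolding J_def by (rule fundamental_theorem_of_calculus[OF Jle])
      (use dh in \<open>auto simp: J_def has_real_derivative_iff_has_vector_derivative[symmetric]\<close>)
  have wpi: "w * (1 - \<eta> - \<eta>) = pi" using e1 by (simp add: w_def field_simps)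
  have s1: "sin (w * (1 - \<eta> - \<eta>)) = 0" "cos (w * (1 - \<eta> - \<eta>)) = -1" using wpi by simp_all
  have ha: "h (1-\<eta>) = w * y (1-\<eta>)" unfolding h_def s1 by simp
  have hb: "h \<eta> = - w * y \<eta>" unfolding h_def by simp
  have hend: "h (1-\<eta>) - h \<eta> = w * (y (1-\<eta>) + y \<eta>)" using ha hb by (simp add: algebra_simps)
  have w0: "0 \<le> w" using e1 by (simp add: w_def)
  have "0 \<le> y (1-\<eta>)" "0 \<le> y \<eta>" using ynn e0 e1 by auto
  then have hnn: "0 \<le> h (1-\<eta>) - h \<eta>" using hend w0 by simp
  have yc: "continuous_on J y" by (rule deriv_cont_on[OF _ J]) (use yd in auto)
  have pcJ: "continuous_on J p0" by (rule continuous_on_subset[OF pc]) (use J in auto)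
  have i1: "(\<lambda>x. p0 x * y x * sin (w * (x - \<eta>))) integrable_on J"
    unfolding J_def by (rule integrable_continuous_real) (intro continuous_intros pcJ[unfolded J_def] yc[unfolded J_def])
  have i2: "(\<lambda>x. y x * sin (w * (x - \<eta>))) integrable_on J"
    unfolding J_def by (rule integrable_continuous_real) (intro continuous_intros yc[unfolded J_def])
  have G: "((\<lambda>x. p0 x * y x * sin (w * (x - \<eta>)) - (mu - w^2) * (y x * sin (w * (x - \<eta>)))) has_integral
      (integral J (\<lambda>x. p0 x * y x * sin (w * (x - \<eta>))) - (mu - w^2) * integral J (\<lambda>x. y x * sin (w * (x - \<eta>))))) J"
    by (intro has_integral_diff integrable_integral i1 has_integral_mult_right i2)
  have eq: "h' x = p0 x * y x * sin (w * (x - \<eta>)) - (mu - w^2) * (y x * sin (w * (x - \<eta>)))" for x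
    by (simp add: h'_def algebra_simps)
  have "integral J (\<lambda>x. p0 x * y x * sin (w * (x - \<eta>))) - (mu - w^2) * integral J (\<lambda>x. y x * sin (w * (x - \<eta>)))
      = h (1-\<eta>) - h \<eta>"
    using has_integral_unique[OF G] F unfolding eq by blast
  then show ?thesis using hnn by (simp add: J_def w_def)
qed

lemma sin_lower:
  fixes a t :: real
  assumes "0 \<le> a" "a \<le> pi/2" "a \<le> t" "t \<le> pi - a"
  shows "sin a \<le> sin t"
proof (cases "t \<le> pi/2")
  case True
  then show ?thesis using assms by (intro sin_monotone_2pi_le) auto
next
  case False
  have "sin a \<le> sin (pi - t)" using assms False by (intro sin_monotone_2pi_le) auto
  then show ?thesis by simp
qed

lemma lower_int:
  fixes y :: "real \<Rightarrow> real"
  assumes yc: "continuous_on {0..1} y" and ynn: "\<forall>x\<in>{0..1}. 0 \<le> y x"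
    and Yb: "\<forall>x\<in>{0..1}. (y x)^2 \<le> Y2" and Y1: "1 \<le> Y2"
    and nrm: "integral {0..1} (\<lambda>x. (y x)^2) = 1"
    and e0: "0 < \<eta>" and e1: "\<eta> \<le> 1/8" and e2: "\<eta> \<le> 1/(8*Y2)"
  shows "sin (pi*\<eta>)/(2*Y2) \<le> integral {\<eta>..1-\<eta>} (\<lambda>x. y x * sin (pi/(1-2*\<eta>) * (x - \<eta>)))"
proof -
  define w where "w = pi/(1-2*\<eta>)"
  define s0 where "s0 = sin (pi * \<eta>)"
  have w1: "pi \<le> w" using e0 e1 by (simp add: w_def field_simps)
  have w0: "0 \<le> w" using w1 pi_gt_zero by linarith
  have we: "w * \<eta> \<le> pi/2" using e0 e1 by (simp add: w_def field_simps)
  have psi0: "0 \<le> sin (w * (x - \<eta>))" if "x \<in> {\<eta>..1-\<eta>}" for x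
  proof (rule sin_ge_zero)
    show "0 \<le> w * (x - \<eta>)" using that w0 by (intro mult_nonneg_nonneg) auto
    have "w * (x - \<eta>) \<le> w * (1 - \<eta> - \<eta>)" using that w0 by (intro mult_left_mono) auto
    also have "\<dots> = pi" using e1 by (simp add: w_def field_simps)
    finally show "w * (x - \<eta>) \<le> pi" .
  qed
  have psis: "s0 \<le> sin (w * (x - \<eta>))" if x: "x \<in> {2*\<eta>..1-2*\<eta>}" for x
  proof -
    have a1: "0 \<le> pi*\<eta>" using e0 by simp
    have a2: "pi*\<eta> \<le> w*\<eta>" using w1 e0 by (intro mult_right_mono) auto
    have "s0 \<le> sin (w * \<eta>)" unfolding s0_def
      by (rule sin_monotone_2pi_le) (use a1 a2 we pi_gt_zero in linarith)+
    also have "\<dots> \<le> sin (w * (x - \<eta>))"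
    proof (rule sin_lower)
      show "0 \<le> w * \<eta>" using e0 w0 by simp
      show "w * \<eta> \<le> pi/2" by (rule we)
      show "w * \<eta> \<le> w * (x - \<eta>)" using x w0 by (intro mult_left_mono) auto
      have "w * (x - \<eta>) \<le> w * (1 - 3 * \<eta>)" using x w0 by (intro mult_left_mono) auto
      also have "\<dots> = pi - w * \<eta>" using e1 by (simp add: w_def field_simps)
      finally show "w * (x - \<eta>) \<le> pi - w * \<eta>" .
    qed
    finally show ?thesis .
  qed
  have s0p: "0 \<le> s0" unfolding s0_def using e0 e1 by (intro sin_ge_zero) auto
  have yY: "(y x)^2 \<le> Y2 * y x" if x: "x \<in> {0..1}" for x
  proof -
    have "y x \<le> Y2" using sq_le_imp_abs_le[OF Yb[rule_format, OF x] Y1] ynn x by auto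
    then show ?thesis using ynn x by (simp add: power2_eq_square mult_right_mono)
  qed
  have yc2: "continuous_on {0..1} (\<lambda>x. (y x)^2)" by (intro continuous_intros yc)
  have iy2: "(\<lambda>x. (y x)^2) integrable_on {a..b}" if "0 \<le> a" "b \<le> 1" for a b
    by (rule integrable_continuous_real, rule continuous_on_subset[OF yc2]) (use that in auto)
  have iyp: "(\<lambda>x. y x * sin (w * (x - \<eta>))) integrable_on {a..b}" if "0 \<le> a" "b \<le> 1" for a b
    by (rule integrable_continuous_real) (intro continuous_intros continuous_on_subset[OF yc], use that in auto)
  have e14: "2 * \<eta> \<le> 1 - 2 * \<eta>" using e1 by simp
  have side: "integral {a..a + 2*\<eta>} (\<lambda>x. (y x)^2) \<le> 2 * \<eta> * Y2" if "0 \<le> a" "a + 2*\<eta> \<le> 1" for a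
  proof -
    have "integral {a..a + 2*\<eta>} (\<lambda>x. (y x)^2) \<le> integral {a..a + 2*\<eta>} (\<lambda>x. Y2)"
      by (rule integral_le[OF iy2]) (use that Yb e0 in auto)
    also have "\<dots> = 2 * \<eta> * Y2" using e0 by simp
    finally show ?thesis .
  qed
  have mid: "1/2 \<le> integral {2*\<eta>..1-2*\<eta>} (\<lambda>x. (y x)^2)"
  proof -
    have "integral {0..2*\<eta>} (\<lambda>x. (y x)^2) + integral {2*\<eta>..1} (\<lambda>x. (y x)^2) = integral {0..1} (\<lambda>x. (y x)^2)"
      by (rule Henstock_Kurzweil_Integration.integral_combine) (use iy2[of 0 1] e0 e1 in auto)
    then have c1: "integral {0..2*\<eta>} (\<lambda>x. (y x)^2) + integral {2*\<eta>..1} (\<lambda>x. (y x)^2) = 1"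
      using nrm by simp
    have c2: "integral {2*\<eta>..1-2*\<eta>} (\<lambda>x. (y x)^2) + integral {1-2*\<eta>..1} (\<lambda>x. (y x)^2) = integral {2*\<eta>..1} (\<lambda>x. (y x)^2)"
      by (rule Henstock_Kurzweil_Integration.integral_combine) (use iy2[of "2*\<eta>" 1] e0 e1 in auto)
    have s1: "integral {0..2*\<eta>} (\<lambda>x. (y x)^2) \<le> 2 * \<eta> * Y2" using side[of 0] e1 by simp
    have s2: "integral {1-2*\<eta>..1} (\<lambda>x. (y x)^2) \<le> 2 * \<eta> * Y2" using side[of "1-2*\<eta>"] e1 by simp
    have "4 * \<eta> * Y2 \<le> 1/2" using e2 Y1 by (simp add: field_simps)
    then show ?thesis using c1 c2 s1 s2 by linarith
  qed
  have "integral {2*\<eta>..1-2*\<eta>} (\<lambda>x. y x * sin (w * (x - \<eta>))) \<le> integral {\<eta>..1-\<eta>} (\<lambda>x. y x * sin (w * (x - \<eta>)))"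
  proof (rule integral_subset_le)
    show "{2*\<eta>..1-2*\<eta>} \<subseteq> {\<eta>..1-\<eta>}" using e0 by auto
    show "(\<lambda>x. y x * sin (w * (x - \<eta>))) integrable_on {2*\<eta>..1-2*\<eta>}" by (rule iyp) (use e0 in auto)
    show "(\<lambda>x. y x * sin (w * (x - \<eta>))) integrable_on {\<eta>..1-\<eta>}" by (rule iyp) (use e0 in auto)
    show "\<forall>x\<in>{\<eta>..1-\<eta>}. 0 \<le> y x * sin (w * (x - \<eta>))"
    proof
      fix x assume x: "x \<in> {\<eta>..1-\<eta>}"
      then show "0 \<le> y x * sin (w * (x - \<eta>))" using psi0[OF x] ynn e0 by (intro mult_nonneg_nonneg) auto
    qed
  qed
  moreover have "integral {2*\<eta>..1-2*\<eta>} (\<lambda>x. (s0 / Y2) * (y x)^2) \<le> integral {2*\<eta>..1-2*\<eta>} (\<lambda>x. y x * sin (w * (x - \<eta>)))"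
  proof (rule integral_le)
    show "(\<lambda>x. (s0 / Y2) * (y x)^2) integrable_on {2*\<eta>..1-2*\<eta>}"
      by (rule integrable_on_mult_right, rule iy2) (use e0 in auto)
    show "(\<lambda>x. y x * sin (w * (x - \<eta>))) integrable_on {2*\<eta>..1-2*\<eta>}" by (rule iyp) (use e0 in auto)
    fix x assume x: "x \<in> {2*\<eta>..1-2*\<eta>}"
    then have x1: "x \<in> {0..1}" using e0 by auto
    have "(s0 / Y2) * (y x)^2 \<le> (s0 / Y2) * (Y2 * y x)"
      by (rule mult_left_mono[OF yY[OF x1]]) (use s0p Y1 in auto)
    also have "\<dots> = s0 * y x" using Y1 by simp
    also have "\<dots> \<le> sin (w * (x - \<eta>)) * y x" by (rule mult_right_mono[OF psis[OF x]]) (use ynn x1 in auto)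
    finally show "(s0 / Y2) * (y x)^2 \<le> y x * sin (w * (x - \<eta>))" by (simp add: mult.commute)
  qed
  moreover have "integral {2*\<eta>..1-2*\<eta>} (\<lambda>x. (s0 / Y2) * (y x)^2) = (s0 / Y2) * integral {2*\<eta>..1-2*\<eta>} (\<lambda>x. (y x)^2)"
    by simp
  moreover have "(s0 / Y2) * (1/2) \<le> (s0 / Y2) * integral {2*\<eta>..1-2*\<eta>} (\<lambda>x. (y x)^2)"
    by (rule mult_left_mono[OF mid]) (use s0p Y1 in auto)
  ultimately show ?thesis unfolding w_def s0_def by (simp add: field_simps)
qed



lemma omega_bound:
  fixes \<eta> \<delta> :: real
  assumes e0: "0 < \<eta>" and e1: "\<eta> \<le> 1/8" and e2: "\<eta> \<le> \<delta>/(16*pi^2)"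
  shows "(pi/(1-2*\<eta>))^2 \<le> pi^2 + \<delta>/2"
proof -
  have tpos: "0 < (1 - 2*\<eta>)^2" using e1 by simp
  have eq: "(1 + 8*\<eta>)*(1-2*\<eta>)^2 = 1 + \<eta>*(4 - 28*\<eta> + 32*\<eta>^2)"
    by (simp add: power2_eq_square algebra_simps)
  have "0 \<le> \<eta>*(4 - 28*\<eta> + 32*\<eta>^2)" using e0 e1 by (intro mult_nonneg_nonneg) auto
  then have k: "1 \<le> (1 + 8*\<eta>)*(1-2*\<eta>)^2" using eq by simp
  have "(pi/(1-2*\<eta>))^2 = pi^2 / (1-2*\<eta>)^2" by (simp add: power_divide)
  also have "\<dots> \<le> pi^2 * (1 + 8*\<eta>)"
    using k tpos by (simp add: divide_le_eq mult.assoc[symmetric] mult_le_cancel_left1)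
  also have "\<dots> = pi^2 + 8 * pi^2 * \<eta>" by (simp add: algebra_simps)
  also have "8 * pi^2 * \<eta> \<le> 8 * pi^2 * (\<delta>/(16*pi^2))" using e2 by (intro mult_left_mono) auto
  also have "8 * pi^2 * (\<delta>/(16*pi^2)) = \<delta>/2" by simp
  finally show ?thesis by simp
qed

lemma pos_final:
  fixes p0 y y' :: "real \<Rightarrow> real"
  assumes pc: "continuous_on {0..1} p0" and p0n: "\<forall>x\<in>{0..1}. 0 \<le> p0 x"
    and yc: "continuous_on {0..1} y" and y01: "y 0 = 0" "y 1 = 0"
    and ypos: "\<forall>x\<in>{0<..<1}. 0 < y x"
    and yd: "\<forall>x\<in>{0<..<1}. (y has_real_derivative y' x) (at x) \<and> (y' has_real_derivative (p0 x - mu) * y x) (at x)"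
    and nrm: "integral {0..1} (\<lambda>x. (y x)^2) = 1"
    and d0: "0 < \<delta>" and mu: "pi^2 + \<delta> \<le> mu"
    and Q1: "integral {1/4..3/4} p0 \<le> Q1" and Q10: "0 \<le> Q1"
    and e0: "0 < \<eta>" and e1: "\<eta> \<le> 1/8" and e2: "\<eta> \<le> \<delta>/(16*pi^2)"
    and e3: "\<eta> \<le> 1/(8*(1 + 960*(1/24 + Q1/256)))"
    and C1: "integral {\<eta>..1-\<eta>} p0 \<le> C1" and C10: "0 < C1"
  shows "((\<delta>/2) * (sin (pi*\<eta>)/(2*(1 + 960*(1/24 + Q1/256)))))^2 / (2*C1) \<le> integral {0..1} (\<lambda>x. p0 x * (y x)^2)"
proof -
  define M0 where "M0 = 960*(1/24 + Q1/256)"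
  define Y2 where "Y2 = 1 + M0"
  define w where "w = pi/(1-2*\<eta>)"
  define J where "J = {\<eta>..1-\<eta>}"
  define A0 where "A0 = sin (pi*\<eta>)/(2*Y2)"
  define D where "D = (\<delta>/2) * A0"
  define eps where "eps = integral {0..1} (\<lambda>x. p0 x * (y x)^2)"
  have M00: "0 \<le> M0" using Q10 by (simp add: M0_def)
  have Y1: "1 \<le> Y2" using M00 by (simp add: Y2_def)
  have muM: "mu \<le> M0" unfolding M0_def by (rule picone_bound[OF pc p0n ypos yd Q1])
  have spos: "0 < sin (pi*\<eta>)" using e0 e1 by (intro sin_gt_zero) auto
  have A0p: "0 < A0" using spos Y1 by (simp add: A0_def)
  have Dp: "0 < D" using A0p d0 by (simp add: D_def)
  obtain P0 where P0: "\<And>x. x \<in> {0..1} \<Longrightarrow> \<bar>p0 x\<bar> \<le> P0"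
    using compact_imp_bounded[OF compact_continuous_image[OF pc compact_Icc]] unfolding bounded_iff by force
  obtain Yb where Yb: "\<And>x. x \<in> {0..1} \<Longrightarrow> \<bar>y x\<bar> \<le> Yb"
    using compact_imp_bounded[OF compact_continuous_image[OF yc compact_Icc]] unfolding bounded_iff by force
  have gb: "\<forall>x\<in>{0<..<1}. \<bar>(p0 x - mu) * y x\<bar> \<le> (P0 + \<bar>mu\<bar>) * Yb"
  proof
    fix x :: real assume x: "x \<in> {0<..<1}"
    have "\<bar>(p0 x - mu) * y x\<bar> = \<bar>p0 x - mu\<bar> * \<bar>y x\<bar>" by (simp add: abs_mult)
    also have "\<dots> \<le> (P0 + \<bar>mu\<bar>) * Yb" by (rule mult_mono) (use P0[of x] Yb[of x] x in auto)
    finally show "\<bar>(p0 x - mu) * y x\<bar> \<le> (P0 + \<bar>mu\<bar>) * Yb" .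
  qed
  have y'b: "\<forall>x\<in>{0<..<1}. \<bar>y' x\<bar> \<le> \<bar>y' (1/2)\<bar> + (P0 + \<bar>mu\<bar>) * Yb"
    by (rule deriv_bdd) (use yd gb in auto)
  note EB = energy_bound_y[OF pc p0n yc y01 yd y'b nrm]
  have ynn: "\<forall>x\<in>{0..1}. 0 \<le> y x"
  proof
    fix x :: real assume "x \<in> {0..1}"
    then show "0 \<le> y x" using ypos y01 by (cases "x = 0"; cases "x = 1") (auto simp: less_imp_le)
  qed
  have yY: "\<forall>x\<in>{0..1}. (y x)^2 \<le> Y2"
  proof
    fix x :: real assume x: "x \<in> {0..1}"
    have "(y x)^2 \<le> 1 + mu"
      by (rule sup_bound_y[OF yc y01(1) _ EB(1) _ x]) (use yd nrm EB(3) in auto)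
    then show "(y x)^2 \<le> Y2" using muM by (simp add: Y2_def)
  qed
  have low: "A0 \<le> integral J (\<lambda>x. y x * sin (w * (x - \<eta>)))"
    unfolding A0_def J_def w_def by (rule lower_int[OF yc ynn yY Y1 nrm e0 e1 e3[folded M0_def, folded Y2_def]])
  have sid: "(mu - w^2) * integral J (\<lambda>x. y x * sin (w * (x - \<eta>))) \<le> integral J (\<lambda>x. p0 x * y x * sin (w * (x - \<eta>)))"
    unfolding J_def w_def by (rule sine_identity[OF pc _ yd e0]) (use ypos e1 in \<open>auto simp: less_imp_le\<close>)
  have wb: "\<delta>/2 \<le> mu - w^2" using omega_bound[OF e0 e1 e2] mu unfolding w_def by simp
  have lowD: "D \<le> integral J (\<lambda>x. p0 x * y x * sin (w * (x - \<eta>)))"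
  proof -
    have "D = (\<delta>/2) * A0" by (simp add: D_def)
    also have "\<dots> \<le> (\<delta>/2) * integral J (\<lambda>x. y x * sin (w * (x - \<eta>)))" using low d0 by simp
    also have "\<dots> \<le> (mu - w^2) * integral J (\<lambda>x. y x * sin (w * (x - \<eta>)))"
      by (rule mult_right_mono[OF wb]) (use low A0p in auto)
    finally show ?thesis using sid by linarith
  qed
  define sk where "sk = C1 / D"
  have sp: "0 < sk" using C10 Dp by (simp add: sk_def)
  have Jsub: "J \<subseteq> {0..1}" using e0 e1 by (auto simp: J_def)
  have pcJ: "continuous_on J p0" by (rule continuous_on_subset[OF pc Jsub])
  have ycJ: "continuous_on J y" by (rule continuous_on_subset[OF yc Jsub])
  have iA: "(\<lambda>x. p0 x * y x * sin (w * (x - \<eta>))) integrable_on J"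
    unfolding J_def by (rule integrable_continuous_real) (intro continuous_intros pcJ[unfolded J_def] ycJ[unfolded J_def])
  have iB: "(\<lambda>x. p0 x * (y x)^2) integrable_on J"
    unfolding J_def by (rule integrable_continuous_real) (intro continuous_intros pcJ[unfolded J_def] ycJ[unfolded J_def])
  have iB1: "(\<lambda>x. p0 x * (y x)^2) integrable_on {0..1}"
    by (rule integrable_continuous_real) (intro continuous_intros pc yc)
  have iC: "p0 integrable_on J"
    unfolding J_def by (rule integrable_continuous_real) (rule pcJ[unfolded J_def])
  have up: "integral J (\<lambda>x. p0 x * y x * sin (w * (x - \<eta>))) \<le> integral J (\<lambda>x. sk * (p0 x * (y x)^2) + (1/(4* sk)) * p0 x)"
  proof (rule integral_le[OF iA])
    show "(\<lambda>x. sk * (p0 x * (y x)^2) + (1/(4* sk)) * p0 x) integrable_on J"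
      by (intro integrable_add integrable_on_mult_right iB iC)
    fix x assume x: "x \<in> J"
    have px: "0 \<le> p0 x" using p0n x Jsub by auto
    let ?a = "y x" and ?b = "sin (w * (x - \<eta>))"
    have "0 \<le> (2 * sk * ?a - ?b)^2" by simp
    then have "4 * sk * (?a * ?b) \<le> 4 * sk * (sk * ?a^2 + ?b^2 / (4 * sk))"
      using sp by (simp add: power2_eq_square algebra_simps)
    then have k1: "?a * ?b \<le> sk * ?a^2 + ?b^2 / (4 * sk)" using sp by simp
    have "?b^2 \<le> 1" by (simp add: sin_squared_eq)
    then have k2: "?b^2 / (4 * sk) \<le> 1 / (4 * sk)" using sp by (simp add: divide_right_mono)
    have "p0 x * (?a * ?b) \<le> p0 x * (sk * ?a^2 + 1 / (4 * sk))"
      by (rule mult_left_mono[OF _ px]) (use k1 k2 in linarith)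
    then show "p0 x * y x * sin (w * (x - \<eta>)) \<le> sk * (p0 x * (y x)^2) + (1/(4* sk)) * p0 x"
      by (simp add: algebra_simps)
  qed
  also have "\<dots> = sk * integral J (\<lambda>x. p0 x * (y x)^2) + (1/(4* sk)) * integral J p0"
  proof -
    have "integral J (\<lambda>x. sk * (p0 x * (y x)^2) + (1/(4 * sk)) * p0 x) =
        integral J (\<lambda>x. sk * (p0 x * (y x)^2)) + integral J (\<lambda>x. (1/(4 * sk)) * p0 x)"
      by (rule integral_add) (intro integrable_on_mult_right iB iC)+
    also have "\<dots> = sk * integral J (\<lambda>x. p0 x * (y x)^2) + (1/(4 * sk)) * integral J p0"
      using integral_mult[OF iB, of sk] integral_mult[OF iC, of "1/(4 * sk)"] by simp
    finally show ?thesis .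
  qed
  also have "integral J (\<lambda>x. p0 x * (y x)^2) \<le> eps"
    unfolding eps_def by (rule integral_subset_le[OF Jsub iB iB1]) (use p0n in auto)
  also have "integral J p0 \<le> C1" using C1 by (simp add: J_def)
  finally have "D \<le> sk * eps + (1/(4* sk)) * C1" using lowD sp by (smt (verit) mult_left_mono divide_nonneg_pos)
  then have "D \<le> C1 * eps / D + D / 4" using Dp C10 by (simp add: sk_def field_simps)
  then have "D * D \<le> D * (C1 * eps / D + D / 4)" using Dp by (intro mult_left_mono) auto
  then have "D * D \<le> C1 * eps + D * D / 4" using Dp by (simp add: field_simps)
  then have k3: "3 * (D * D) \<le> 4 * (C1 * eps)" by simp
  have k4: "0 \<le> D * D" by simp
  have "D * D \<le> 2 * (C1 * eps)" using k3 k4 by linarith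
  then have "D^2 / (2 * C1) \<le> eps" using C10 Dp by (simp add: field_simps power2_eq_square)
  then show ?thesis unfolding D_def A0_def Y2_def M0_def eps_def by simp
qed



lemma L1_bound:
  fixes r q :: "real \<Rightarrow> real"
  assumes inA: "in_A r \<gamma> q" and g1: "1 < \<gamma>"
    and cd: "0 < c" "c \<le> d" "d < 1"
    and rpos: "\<forall>x\<in>{0<..<1}. 0 < r x"
    and m: "0 < m" "\<forall>x\<in>{c..d}. m \<le> r x"
  shows "integral {c..d} q \<le> (d - c) + 1/m"
proof -
  have qi: "\<And>a b. 0 < a \<Longrightarrow> a \<le> b \<Longrightarrow> b < 1 \<Longrightarrow> q integrable_on {a..b}"
    and qn: "\<forall>x\<in>{0<..<1}. 0 \<le> q x"
    and ri: "(\<lambda>x. r x * q x powr \<gamma>) integrable_on {0..1}"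
    and rl: "integral {0..1} (\<lambda>x. r x * q x powr \<gamma>) \<le> 1"
    using inA unfolding in_A_def by auto
  define g where "g x = (if x \<in> {0<..<1} then r x * q x powr \<gamma> else 0)" for x
  have neg: "negligible {0::real, 1}" by auto
  have gsp: "\<And>x. x \<in> {0..1} - {0, 1} \<Longrightarrow> g x = r x * q x powr \<gamma>" by (auto simp: g_def)
  have gi: "g integrable_on {0..1}" by (rule integrable_spike[OF ri neg gsp])
  have gI: "integral {0..1} g = integral {0..1} (\<lambda>x. r x * q x powr \<gamma>)"
    by (rule integral_spike[OF neg]) (use gsp in auto)
  have gnn: "\<forall>x\<in>{0..1}. 0 \<le> g x"
  proof
    fix x :: real assume "x \<in> {0..1}"
    show "0 \<le> g x"
    proof (cases "x \<in> {0<..<1}")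
      case True
      then have "0 < r x" using rpos by blast
      then show ?thesis using True by (simp add: g_def)
    next
      case False then have "g x = 0" unfolding g_def by (simp only: if_False) 
      then show ?thesis by simp
    qed
  qed
  have sub: "{c..d} \<subseteq> {0..1}" using cd by auto
  have gci: "g integrable_on {c..d}" by (rule integrable_on_subinterval[OF gi sub])
  have gle: "integral {c..d} g \<le> 1"
    using integral_subset_le[OF sub gci gi gnn] gI rl by linarith
  have "integral {c..d} q \<le> integral {c..d} (\<lambda>x. 1 + g x / m)"
  proof (rule integral_le)
    show "q integrable_on {c..d}" by (rule qi) (use cd in auto)
    show "(\<lambda>x. 1 + g x / m) integrable_on {c..d}"
      by (intro integrable_add integrable_on_const gci integrable_on_mult_left[of "g", where c="1/m", simplified]) (use gci in \<open>auto simp: divide_inverse integrable_on_mult_left\<close>)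
    fix x assume x: "x \<in> {c..d}"
    then have x01: "x \<in> {0<..<1}" using cd by auto
    have qx: "0 \<le> q x" using qn x01 by auto
    have gx: "g x = r x * q x powr \<gamma>" using x01 by (simp add: g_def)
    have mr: "m \<le> r x" using m x by auto
    show "q x \<le> 1 + g x / m"
    proof (cases "q x \<le> 1")
      case True
      have "0 \<le> g x / m" using gnn x sub m by auto
      then show ?thesis using True by linarith
    next
      case False
      have "q x = q x powr 1" using qx by (simp add: powr_one)
      also have "\<dots> \<le> q x powr \<gamma>" by (rule powr_mono) (use False g1 in auto)
      also have "\<dots> \<le> g x / m"
      proof -
        have "m * q x powr \<gamma> \<le> r x * q x powr \<gamma>" by (rule mult_right_mono[OF mr]) simp
        then show ?thesis using m gx by (simp add: field_simps)
      qed
      finally show ?thesis by linarith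
    qed
  qed
  also have "\<dots> = (d - c) + integral {c..d} g / m"
  proof -
    have "integral {c..d} (\<lambda>x. 1 + g x / m) = integral {c..d} (\<lambda>x. 1) + integral {c..d} (\<lambda>x. g x / m)"
      by (rule integral_add) (use gci in \<open>auto simp: divide_inverse intro: integrable_on_mult_left\<close>)
    also have "integral {c..d} (\<lambda>x. g x / m) = integral {c..d} g / m"
      using integral_mult[OF gci, of "1/m"] by (simp add: divide_inverse mult.commute)
    finally show ?thesis using cd by simp
  qed
  also have "\<dots> \<le> (d - c) + 1/m" using gle m by (simp add: divide_right_mono)
  finally show ?thesis .
qed



lemma INF_pos_lower:
  fixes r :: "real \<Rightarrow> real"
  assumes rc: "continuous_on {0<..<1} r" and cd: "0 < c" "c \<le> d" "d < 1"
  shows "\<forall>x\<in>{c..d}. (INF t\<in>{c..d}. r t) \<le> r x"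
proof
  fix x assume x: "x \<in> {c..d}"
  have "continuous_on {c..d} r" by (rule continuous_on_subset[OF rc]) (use cd in auto)
  then have "bounded (r ` {c..d})" by (intro compact_imp_bounded compact_continuous_image) auto
  then have "bdd_below (r ` {c..d})" by (rule bounded_imp_bdd_below)
  then show "(INF t\<in>{c..d}. r t) \<le> r x" using x by (intro cINF_lower) auto
qed

theorem mainTheorem15:
  fixes r :: "real \<Rightarrow> real" and \<gamma> \<delta> :: real
  assumes "continuous_on {0<..<1} r"
    and "\<And>a b. 0 < a \<Longrightarrow> a \<le> b \<Longrightarrow> b < 1 \<Longrightarrow> (INF x\<in>{a..b}. r x) > 0"
    and "\<gamma> > 1" and "\<delta> > 0"
  shows "\<exists>\<kappa>>0. \<forall>q y. in_B r \<gamma> \<delta> q \<longrightarrow> is_eigenfun q (lambda0 q) y \<longrightarrow>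
           integral {0..1} (\<lambda>x. (y x)^2) = 1 \<longrightarrow>
           integral {0..1} (\<lambda>x. (q x - \<kappa>) * (y x)^2) \<ge> 0"
proof -
  note rc = assms(1) and rinf = assms(2) and g1 = assms(3) and d0 = assms(4)
  have rpos: "\<forall>x\<in>{0<..<1}. 0 < r x"
  proof
    fix x :: real assume "x \<in> {0<..<1}"
    then have "(INF t\<in>{x..x}. r t) > 0" by (intro rinf) auto
    then show "0 < r x" by simp
  qed
  define m1 where "m1 = (INF t\<in>{1/4..3/4::real}. r t)"
  have m1p: "0 < m1" unfolding m1_def by (rule rinf) auto
  have m1l: "\<forall>x\<in>{1/4..3/4}. m1 \<le> r x" unfolding m1_def by (rule INF_pos_lower[OF rc]) auto
  define Q1 where "Q1 = 1/2 + 1/m1"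
  have Q10: "0 \<le> Q1" using m1p by (simp add: Q1_def)
  define M0 where "M0 = 960*(1/24 + Q1/256)"
  have M00: "0 \<le> M0" using Q10 by (simp add: M0_def)
  define \<eta> where "\<eta> = min (1/8) (min (\<delta>/(16*pi^2)) (1/(8*(1 + M0))))"
  have e0: "0 < \<eta>" using d0 M00 by (simp add: \<eta>_def)
  have e1: "\<eta> \<le> 1/8" and e2: "\<eta> \<le> \<delta>/(16*pi^2)" and e3: "\<eta> \<le> 1/(8*(1 + M0))"
    by (auto simp: \<eta>_def)
  define m2 where "m2 = (INF t\<in>{\<eta>..1-\<eta>}. r t)"
  have m2p: "0 < m2" unfolding m2_def by (rule rinf) (use e0 e1 in auto)
  have m2l: "\<forall>x\<in>{\<eta>..1-\<eta>}. m2 \<le> r x" unfolding m2_def by (rule INF_pos_lower[OF rc]) (use e0 e1 in auto)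
  define C1 where "C1 = 1 + 1/m2"
  have C1p: "0 < C1" using m2p by (simp add: C1_def add_pos_pos)
  define \<kappa> where "\<kappa> = ((\<delta>/2) * (sin (pi*\<eta>)/(2*(1 + M0))))^2 / (2*C1)"
  have spos: "0 < sin (pi*\<eta>)" using e0 e1 by (intro sin_gt_zero) auto
  have kp: "0 < \<kappa>" unfolding \<kappa>_def using d0 spos M00 C1p by (intro divide_pos_pos) auto
  show ?thesis
  proof (intro exI[of _ \<kappa>] conjI kp allI impI)
    fix q y :: "real \<Rightarrow> real"
    assume qB: "in_B r \<gamma> \<delta> q" and ye: "is_eigenfun q (lambda0 q) y" and nrm0: "integral {0..1} (\<lambda>x. (y x)^2) = 1"
    obtain a b where inA: "in_A r \<gamma> q" and qc: "continuous_on {0<..<1} q"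
      and ab: "0 < a" "a \<le> b" "b < 1" and qz: "\<forall>x\<in>{0<..<1} - {a..b}. q x = 0"
      and lam: "pi^2 + \<delta> \<le> lambda0 q"
      using qB unfolding in_B_def by blast
    have qn: "\<forall>x\<in>{0<..<1}. 0 \<le> q x" using inA unfolding in_A_def by blast
    define mu where "mu = lambda0 q"
    have mumin: "\<And>l z. is_eigenfun q l z \<Longrightarrow> mu \<le> l" unfolding mu_def by (rule lambda0_le[OF qn])
    have yem: "is_eigenfun q mu y" using ye by (simp add: mu_def)
    have "\<exists>s. (s = 1 \<or> s = -1) \<and> (\<forall>x\<in>{0<..<1}. 0 < s * y x)"
      by (rule ground_pos[OF qc ab qz qn yem mumin])
    then obtain s where s: "s = 1 \<or> s = -1" "\<forall>x\<in>{0<..<1}. 0 < s * y x" by blast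
    have s2: "s * s = 1" using s(1) by auto
    obtain y' where yc: "continuous_on {0..1} y" and y01: "y 0 = 0" "y 1 = 0"
      and yd: "\<forall>x\<in>{0<..<1}. (y has_real_derivative y' x) (at x) \<and> (y' has_real_derivative (q x - mu) * y x) (at x)"
      using yem unfolding is_eigenfun_def by blast
    define p0 where "p0 = (\<lambda>x. if x \<in> {0<..<1} then q x else (0::real))"
    have pc: "continuous_on {0..1} p0" unfolding p0_def by (rule p0_cont[OF qc ab qz])
    have p0n: "\<forall>x\<in>{0..1}. 0 \<le> p0 x" using qn by (auto simp: p0_def)
    define ys where "ys x = s * y x" for x
    define ys' where "ys' x = s * y' x" for x
    have ysc: "continuous_on {0..1} ys" unfolding ys_def by (intro continuous_intros yc)
    have ys01: "ys 0 = 0" "ys 1 = 0" using y01 by (auto simp: ys_def)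
    have yspos: "\<forall>x\<in>{0<..<1}. 0 < ys x" using s(2) by (simp add: ys_def)
    have ysd: "\<forall>x\<in>{0<..<1}. (ys has_real_derivative ys' x) (at x) \<and> (ys' has_real_derivative (p0 x - mu) * ys x) (at x)"
    proof
      fix x :: real assume x: "x \<in> {0<..<1}"
      have "(ys has_real_derivative s * y' x) (at x)" unfolding ys_def using yd x by (auto intro!: derivative_eq_intros)
      moreover have "(ys' has_real_derivative s * ((q x - mu) * y x)) (at x)" unfolding ys'_def using yd x by (auto intro!: derivative_eq_intros)
      ultimately show "(ys has_real_derivative ys' x) (at x) \<and> (ys' has_real_derivative (p0 x - mu) * ys x) (at x)"
        using x by (simp add: ys_def ys'_def p0_def algebra_simps)
    qed
    have s2': "s^2 = 1" using s(1) by auto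
    have ysq: "(ys x)^2 = (y x)^2" for x by (simp add: ys_def power_mult_distrib s2')
    have nrm: "integral {0..1} (\<lambda>x. (ys x)^2) = 1" using nrm0 by (simp add: ysq)
    have p0q: "\<And>x. x \<in> {0<..<1} \<Longrightarrow> p0 x = q x" by (simp add: p0_def)
    have Q1b: "integral {1/4..3/4} p0 \<le> Q1"
    proof -
      have "integral {1/4..3/4} p0 = integral {1/4..3/4} q"
        by (rule integral_cong) (auto simp: p0_def)
      also have "\<dots> \<le> (3/4 - 1/4) + 1/m1" by (rule L1_bound[OF inA g1 _ _ _ rpos m1p m1l]) auto
      finally show ?thesis by (simp add: Q1_def)
    qed
    have C1b: "integral {\<eta>..1-\<eta>} p0 \<le> C1"
    proof -
      have "integral {\<eta>..1-\<eta>} p0 = integral {\<eta>..1-\<eta>} q"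
        by (rule integral_cong) (use e0 e1 in \<open>auto simp: p0_def\<close>)
      also have "\<dots> \<le> ((1-\<eta>) - \<eta>) + 1/m2" by (rule L1_bound[OF inA g1 _ _ _ rpos m2p m2l]) (use e0 e1 in auto)
      also have "\<dots> \<le> C1" using e0 by (simp add: C1_def)
      finally show ?thesis .
    qed
    have lamu: "pi^2 + \<delta> \<le> mu" using lam by (simp add: mu_def)
    have main: "\<kappa> \<le> integral {0..1} (\<lambda>x. p0 x * (ys x)^2)"
      unfolding \<kappa>_def M0_def
      by (rule pos_final[OF pc p0n ysc ys01 yspos ysd nrm d0 lamu Q1b Q10 e0 e1 e2 e3[unfolded M0_def] C1b C1p])
    have ip: "(\<lambda>x. p0 x * (ys x)^2) integrable_on {0..1}"
      by (intro integrable_continuous_real continuous_intros pc ysc)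
    have iy: "(\<lambda>x. (ys x)^2) integrable_on {0..1}"
      by (intro integrable_continuous_real continuous_intros ysc)
    have "integral {0..1} (\<lambda>x. (q x - \<kappa>) * (y x)^2) = integral {0..1} (\<lambda>x. p0 x * (ys x)^2 - \<kappa> * (ys x)^2)"
    proof (rule integral_spike[of "{0,1}"])
      show "negligible {0::real, 1}" by auto
      fix x assume "x \<in> {0..1} - {0::real, 1}"
      then have "x \<in> {0<..<1}" by auto
      then show "p0 x * (ys x)^2 - \<kappa> * (ys x)^2 = (q x - \<kappa>) * (y x)^2"
        by (simp add: p0q ysq algebra_simps)
    qed
    moreover have d1: "integral {0..1} (\<lambda>x. p0 x * (ys x)^2 - \<kappa> * (ys x)^2) =
        integral {0..1} (\<lambda>x. p0 x * (ys x)^2) - integral {0..1} (\<lambda>x. \<kappa> * (ys x)^2)"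
      by (rule integral_diff[OF ip integrable_on_mult_right[OF iy]])
    moreover have d2: "integral {0..1} (\<lambda>x. \<kappa> * (ys x)^2) = \<kappa> * integral {0..1} (\<lambda>x. (ys x)^2)"
      by (rule integral_mult[OF iy, symmetric])
    moreover have d3: "\<kappa> * integral {0..1} (\<lambda>x. (ys x)^2) = \<kappa>" using nrm by simp
    ultimately show "integral {0..1} (\<lambda>x. (q x - \<kappa>) * (y x)^2) \<ge> 0" using main by linarith
  qed
qed


end
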